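(* For two-server CARD, \[ \mathbb E[B]\le\frac{m_+}{\beta},\qquad \mathbb E[B_e]\le\frac{c+m_+}{\beta}\le\frac{2c}{\beta},\qquad \mathbb E[(B_e)_e]\le\frac{c+m_+}{\beta}\le\frac{2c}{\beta}. \]
   Context: Two-server model: servers $1$ (short, work $W_s$) and $2$ (long, work $W_\ell$), each with its own FCFS queue, each completing work at rate $1/2$ while nonempty. Poisson arrivals of rate $\lambda$, i.i.d. job sizes $S$ with continuous distribution and $\mathbb E[S^2]<\infty$; $\rho=\lambda\mathbb E[S]$, $\epsilon=1-\rho<1/2$. CARD with parameters $0\le m_-\le m_+\le c$: jobs of size $<m_-$ go to the short server; jobs of size in $[m_-,m_+)$ go to the short server if $W_s\le c$ at arrival and to the long server otherwise; jobs of size $\ge m_+$ go to the long server. $\rho_s=\lambda\mathbb E[S\mathbf 1(S<m_-)]$, $\rho_m=\lambda\mathbb E[S\mathbf 1(m_-\le S<m_+)]$, $\alpha=\frac12-\rho_s>0$, $\beta=\rho_s+\rho_m-\frac12>0$. Below/above periods: time $t$ is in a below period if $W_s(t)\le c$ and in an above period if $W_s(t)>c$; a below-above cycle is a complete below period followed by a complete above period (cycles start at times with $W_s(t)=c$). In a cycle starting at time $0$, $B=\inf\{t>0:W_s(t)>c\}$ and $A=\inf\{t>B:W_s(t)=c\}-B$... more precisely $B$ and $A$ denote the lengths of the below and above periods of a generic (stationary) below-above cycle. For a nonnegative random variable $V$ with finite positive mean, its excess $V_e$ has density $\mathbb P(V>t)/\mathbb E[V]$, so $\mathbb E[V_e]=\mathbb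 E[V^2]/(2\mathbb E[V])$. *)

theory Defs
  imports "HOL-Probability.Probability"
begin

definition to_short :: "real \<Rightarrow> real \<Rightarrow> real \<Rightarrow> real \<Rightarrow> real \<Rightarrow> bool" where
  "to_short mm mp c w s \<longleftrightarrow> s < mm \<or> (mm \<le> s \<and> s < mp \<and> w \<le> c)"

text \<open>Arrival time of job n (n = 0,1,2,...): T i is the interarrival time before job i.\<close>
definition arr :: "(nat \<Rightarrow> real) \<Rightarrow> nat \<Rightarrow> real" where
  "arr T n = (\<Sum>i<Suc n. T i)"

text \<open>Short-server workload just after the arrival of job n (rate 1/2 service, FCFS),
  starting from short-server workload w0 at time 0.\<close>
fun ws_post :: "real \<Rightarrow> real \<Rightarrow> real \<Rightarrow> real \<Rightarrow> (nat \<Rightarrow> real) \<Rightarrow> (nat \<Rightarrow> real) \<Rightarrow> nat \<Rightarrow> real" where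
  "ws_post mm mp c w0 T S 0 =
     (let w = max 0 (w0 - T 0 / 2) in w + (if to_short mm mp c w (S 0) then S 0 else 0))"
| "ws_post mm mp c w0 T S (Suc n) =
     (let w = max 0 (ws_post mm mp c w0 T S n - T (Suc n) / 2)
      in w + (if to_short mm mp c w (S (Suc n)) then S (Suc n) else 0))"

text \<open>Short-server workload W_s(t) at time t >= 0 (right-continuous).\<close>
definition ws :: "real \<Rightarrow> real \<Rightarrow> real \<Rightarrow> real \<Rightarrow> (nat \<Rightarrow> real) \<Rightarrow> (nat \<Rightarrow> real) \<Rightarrow> real \<Rightarrow> real" where
  "ws mm mp c w0 T S t =
     (if t < arr T 0 then max 0 (w0 - t / 2)
      else (let n = (GREATEST n. arr T n \<le> t)
            in max 0 (ws_post mm mp c w0 T S n - (t - arr T n) / 2)))"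

definition below_len :: "real \<Rightarrow> real \<Rightarrow> real \<Rightarrow> (nat \<Rightarrow> real) \<Rightarrow> (nat \<Rightarrow> real) \<Rightarrow> real" where
  "below_len mm mp c T S = Inf {t. 0 < t \<and> ws mm mp c c T S t > c}"

definition excess :: "real measure \<Rightarrow> real measure" where
  "excess N = density lborel
     (\<lambda>t. ennreal (indicator {0..} t * measure N {t<..} / (\<integral>x. x \<partial>N)))"

end

theory Submission
  imports Defs
begin

lemma arr_Suc: "arr T (Suc n) = arr T n + T (Suc n)"
  by (simp add: arr_def)

lemma arr_0: "arr T 0 = T 0"
  by (simp add: arr_def)

lemma arr_strict_mono:
  fixes T :: "nat \<Rightarrow> real" and m n :: nat
  assumes "\<And>i. T i > 0" and "m < n" shows "arr T m < arr T n"
  using assms(2)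
proof (induction n)
  case 0 then show ?case by simp
next
  case (Suc n)
  then show ?case using assms(1)[of "Suc n"]
    by (cases "m = n") (auto simp: arr_Suc)
qed

lemma arr_pos: fixes T :: "nat \<Rightarrow> real" assumes "\<And>i. T i > 0" shows "arr T n > 0"
proof (cases n)
  case 0 then show ?thesis using assms[of 0] by (simp add: arr_0)
next
  case (Suc k) then show ?thesis using arr_strict_mono[of T 0 n] assms assms[of 0] by (simp add: arr_0) (smt (verit))
qed

lemma below_len_good:
  fixes T S :: "nat \<Rightarrow> real"
  assumes c: "0 \<le> c" and Tpos: "\<And>i. T i > 0"
    and pN: "ws_post mm mp c c T S N > c" and pj: "\<And>j. j < N \<Longrightarrow> ws_post mm mp c c T S j \<le> c"
  shows "below_len mm mp c T S = arr T N" "ws mm mp c c T S (arr T N) > c"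
proof -
  have sm: "m < n \<Longrightarrow> arr T m < arr T n" for m n using arr_strict_mono[of T m n] Tpos by blast
  have G: "(GREATEST n. arr T n \<le> arr T N) = N"
  proof (rule Greatest_equality)
    fix y assume "arr T y \<le> arr T N"
    then show "y \<le> N" using sm[of N y] by (cases "N < y") auto
  qed simp
  have a0: "arr T 0 \<le> arr T N" using sm[of 0 N] by (cases N) auto
  show ws: "ws mm mp c c T S (arr T N) > c"
    using pN a0 unfolding ws_def G by (auto simp: Let_def)
  have below: "ws mm mp c c T S t \<le> c" if t: "0 < t" "t < arr T N" for t
  proof (cases "t < arr T 0")
    case True then show ?thesis using c t by (simp add: ws_def)
  next
    case False
    let ?P = "\<lambda>n. arr T n \<le> t"
    have bnd: "?P n \<Longrightarrow> n < N" for n using sm[of N n] t by (cases n N rule: linorder_cases) auto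
    have P0: "?P 0" using False by simp
    have gP: "?P (GREATEST n. ?P n)" by (rule GreatestI_nat[where P="?P" and k=0 and b=N, OF P0]) (use bnd in force)
    have gN: "(GREATEST n. ?P n) < N" using bnd[OF gP] .
    have "ws mm mp c c T S t = max 0 (ws_post mm mp c c T S (GREATEST n. ?P n) - (t - arr T (GREATEST n. ?P n)) / 2)"
      using False by (simp add: ws_def Let_def)
    also have "\<dots> \<le> c"
    proof -
      define g where "g = (GREATEST n. ?P n)"
      have "ws_post mm mp c c T S g \<le> c" "arr T g \<le> t" using pj[OF gN] gP unfolding g_def by auto
      then show ?thesis using c unfolding g_def[symmetric] by (simp add: max_def field_simps)
    qed
    finally show ?thesis .
  qed
  have pos: "0 < arr T N" by (rule arr_pos[OF Tpos])
  show "below_len mm mp c T S = arr T N"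
    unfolding below_len_def
  proof (rule cInf_eq_minimum)
    show "arr T N \<in> {t. 0 < t \<and> c < ws mm mp c c T S t}" using ws pos by simp
    fix y assume "y \<in> {t. 0 < t \<and> c < ws mm mp c c T S t}"
    then show "arr T N \<le> y" using below[of y] by force
  qed
qed

lemma Greatest_unbounded:
  fixes P :: "nat \<Rightarrow> bool"
  assumes "\<And>n. P n \<Longrightarrow> \<exists>m>n. P m"
  shows "(GREATEST n. P n) = (GREATEST n::nat. False)"
proof -
  have "(\<lambda>x. P x \<and> (\<forall>y. P y \<longrightarrow> y \<le> x)) = (\<lambda>x. False \<and> (\<forall>y. False \<longrightarrow> y \<le> x))"
    using assms by (fastforce simp: fun_eq_iff)
  then show ?thesis unfolding Greatest_def by simp
qed

definition g0 :: nat where "g0 = (GREATEST n::nat. False)"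

lemma ws_gt_iff:
  fixes T S :: "nat \<Rightarrow> real"
  assumes c: "0 \<le> c" and t: "0 < t"
  shows "c < ws mm mp c c T S t \<longleftrightarrow> arr T 0 \<le> t \<and>
     ((\<exists>n. arr T n \<le> t \<and> (\<forall>m>n. t < arr T m) \<and> t < arr T n + 2 * (ws_post mm mp c c T S n - c)) \<or>
      ((\<forall>N. \<exists>m\<ge>N. arr T m \<le> t) \<and> t < arr T g0 + 2 * (ws_post mm mp c c T S g0 - c)))"
proof (cases "t < arr T 0")
  case True
  then show ?thesis using c t by (simp add: ws_def)
next
  case False
  let ?P = "\<lambda>n. arr T n \<le> t"
  have mx: "c < max 0 (p - (t - a) / 2) \<longleftrightarrow> t < a + 2 * (p - c)" for p a :: real
    using c by (auto simp: max_def field_simps)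
  show ?thesis
  proof (cases "\<exists>n. ?P n \<and> (\<forall>m>n. t < arr T m)")
    case True
    then obtain n where n: "?P n" "\<forall>m>n. t < arr T m" by blast
    have G: "(GREATEST n. ?P n) = n"
      by (rule Greatest_equality) (use n in \<open>auto simp: not_less[symmetric]\<close>)
    have uniq: "?P n' \<and> (\<forall>m>n'. t < arr T m) \<Longrightarrow> n' = n" for n'
      using n by (metis linorder_neqE_nat not_less)
    have notinf: "\<not> (\<forall>N. \<exists>m\<ge>N. arr T m \<le> t)"
      using n(2) by (metis Suc_le_eq not_less)
    have "c < ws mm mp c c T S t \<longleftrightarrow> t < arr T n + 2 * (ws_post mm mp c c T S n - c)"
      using False unfolding ws_def G by (simp add: Let_def mx)
    moreover have "(\<exists>n'. arr T n' \<le> t \<and> (\<forall>m>n'. t < arr T m) \<and> t < arr T n' + 2 * (ws_post mm mp c c T S n' - c))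
        \<longleftrightarrow> t < arr T n + 2 * (ws_post mm mp c c T S n - c)"
    proof
      assume "\<exists>n'. arr T n' \<le> t \<and> (\<forall>m>n'. t < arr T m) \<and> t < arr T n' + 2 * (ws_post mm mp c c T S n' - c)"
      then obtain n' where "arr T n' \<le> t \<and> (\<forall>m>n'. t < arr T m)" "t < arr T n' + 2 * (ws_post mm mp c c T S n' - c)" by blast
      with uniq[of n'] show "t < arr T n + 2 * (ws_post mm mp c c T S n - c)" by simp
    qed (use n in blast)
    moreover have "arr T 0 \<le> t" using False by simp
    ultimately show ?thesis using notinf by blast
  next
    case nf: False
    then have unb: "?P n \<Longrightarrow> \<exists>m>n. ?P m" for n by (auto simp: not_less)
    have G: "(GREATEST n. ?P n) = g0" unfolding g0_def by (rule Greatest_unbounded[OF unb])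
    have inf: "\<forall>N. \<exists>m\<ge>N. arr T m \<le> t"
    proof
      fix N show "\<exists>m\<ge>N. arr T m \<le> t"
      proof (induction N)
        case 0 then show ?case using False by (intro exI[of _ 0]) simp
      next
        case (Suc N) then obtain m where "m \<ge> N" "?P m" by blast
        then obtain m' where "m' > m" "?P m'" using unb by blast
        then show ?case using \<open>m \<ge> N\<close> by (intro exI[of _ m']) auto
      qed
    qed
    have "c < ws mm mp c c T S t \<longleftrightarrow> t < arr T g0 + 2 * (ws_post mm mp c c T S g0 - c)"
      using False unfolding ws_def G by (simp add: Let_def mx)
    moreover have "arr T 0 \<le> t" using False by simp
    moreover have "\<not> (\<exists>n. arr T n \<le> t \<and> (\<forall>m>n. t < arr T m) \<and> t < arr T n + 2 * (ws_post mm mp c c T S n - c))"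
      using nf by blast
    ultimately show ?thesis using inf by blast
  qed
qed

lemma measurable_arr[measurable]:
  assumes [measurable]: "\<And>i. T' i \<in> borel_measurable N"
  shows "(\<lambda>\<omega>. arr (\<lambda>i. T' i \<omega>) n) \<in> borel_measurable N"
  unfolding arr_def by measurable

lemma measurable_ws_post[measurable]:
  assumes [measurable]: "\<And>i. T' i \<in> borel_measurable N" "\<And>i. S' i \<in> borel_measurable N"
  shows "(\<lambda>\<omega>. ws_post mm mp c w0 (\<lambda>i. T' i \<omega>) (\<lambda>i. S' i \<omega>) n) \<in> borel_measurable N"
proof (induction n)
  case 0 show ?case by (simp add: Let_def to_short_def) measurable
next
  case (Suc n)
  note [measurable] = Suc
  show ?case by (simp add: Let_def to_short_def) measurable
qed

definition QA :: "(nat \<Rightarrow> real) \<Rightarrow> (nat \<Rightarrow> real) \<Rightarrow> nat \<Rightarrow> real \<Rightarrow> bool" where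
  "QA A b n x \<longleftrightarrow>
     (0 < max (A 0) (A n) \<and> max (A 0) (A n) < min x (b n) \<and> (\<forall>m>n. max (A 0) (A n) < A m)) \<or>
     (max (A 0) (A n) \<le> 0 \<and> (\<exists>k::nat. 1 / (real k + 1) < min x (b n) \<and> (\<forall>m>n. 1 / (real k + 1) < A m)))"

definition QB :: "(nat \<Rightarrow> real) \<Rightarrow> real \<Rightarrow> real \<Rightarrow> bool" where
  "QB A g x \<longleftrightarrow> (\<exists>q::rat. 0 < real_of_rat q \<and> real_of_rat q < min x g \<and> A 0 \<le> real_of_rat q \<and>
       (\<forall>M. \<exists>m\<ge>M. A m \<le> real_of_rat q))"

lemma QA_iff:
  "(\<exists>t. 0 < t \<and> t < x \<and> A 0 \<le> t \<and> A n \<le> t \<and> (\<forall>m>n. t < A m) \<and> t < b n) \<longleftrightarrow> QA A b n x"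
proof
  assume "\<exists>t. 0 < t \<and> t < x \<and> A 0 \<le> t \<and> A n \<le> t \<and> (\<forall>m>n. t < A m) \<and> t < b n"
  then obtain t where t: "0 < t" "t < x" "A 0 \<le> t" "A n \<le> t" "\<forall>m>n. t < A m" "t < b n" by blast
  show "QA A b n x"
  proof (cases "0 < max (A 0) (A n)")
    case True
    have lo: "max (A 0) (A n) \<le> t" using t by simp
    have "max (A 0) (A n) < min x (b n)" using lo t(2) t(6) by simp
    moreover have "\<forall>m>n. max (A 0) (A n) < A m" using lo t(5) by (auto intro: le_less_trans)
    ultimately show ?thesis unfolding QA_def using True by blast
  next
    case False
    obtain k :: nat where k: "1 / (real k + 1) < t"
      using reals_Archimedean[OF t(1)] by (auto simp: inverse_eq_divide add.commute)
    have "1 / (real k + 1) < min x (b n)" "\<forall>m>n. 1 / (real k + 1) < A m" using t k by auto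
    then show ?thesis unfolding QA_def using False by auto
  qed
next
  assume "QA A b n x"
  then show "\<exists>t. 0 < t \<and> t < x \<and> A 0 \<le> t \<and> A n \<le> t \<and> (\<forall>m>n. t < A m) \<and> t < b n"
    unfolding QA_def
  proof (elim disjE conjE exE)
    assume "0 < max (A 0) (A n)" "max (A 0) (A n) < min x (b n)" "\<forall>m>n. max (A 0) (A n) < A m"
    then show ?thesis by (intro exI[of _ "max (A 0) (A n)"]) auto
  next
    fix k :: nat
    assume "max (A 0) (A n) \<le> 0" "1 / (real k + 1) < min x (b n)" "\<forall>m>n. 1 / (real k + 1) < A m"
    moreover have p: "0 < 1 / (real k + 1)" by simp
    ultimately have "A 0 \<le> 0" "A n \<le> 0" by auto
    then have "A 0 \<le> 1 / (real k + 1)" "A n \<le> 1 / (real k + 1)" using p by linarith+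
    with p \<open>1 / (real k + 1) < min x (b n)\<close> \<open>\<forall>m>n. 1 / (real k + 1) < A m\<close>
    show ?thesis by (intro exI[of _ "1 / (real k + 1)"]) auto
  qed
qed

lemma QB_iff:
  "(\<exists>t. 0 < t \<and> t < x \<and> A 0 \<le> t \<and> (\<forall>M. \<exists>m\<ge>M. A m \<le> t) \<and> t < g) \<longleftrightarrow> QB A g x"
proof
  assume "\<exists>t. 0 < t \<and> t < x \<and> A 0 \<le> t \<and> (\<forall>M. \<exists>m\<ge>M. A m \<le> t) \<and> t < g"
  then obtain t where t: "0 < t" "t < x" "A 0 \<le> t" "\<forall>M. \<exists>m\<ge>M. A m \<le> t" "t < g" by blast
  have "t < min x g" using t by simp
  then obtain q where q: "t < real_of_rat q" "real_of_rat q < min x g" using of_rat_dense by blast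
  have "0 < real_of_rat q" "A 0 \<le> real_of_rat q" using t q by linarith+
  moreover have "\<forall>M. \<exists>m\<ge>M. A m \<le> real_of_rat q"
  proof
    fix M obtain m where "m \<ge> M" "A m \<le> t" using t(4) by blast
    then show "\<exists>m\<ge>M. A m \<le> real_of_rat q" using q(1) by (intro exI[of _ m]) simp
  qed
  ultimately show "QB A g x" unfolding QB_def using q(2) by blast
next
  assume "QB A g x"
  then show "\<exists>t. 0 < t \<and> t < x \<and> A 0 \<le> t \<and> (\<forall>M. \<exists>m\<ge>M. A m \<le> t) \<and> t < g"
    unfolding QB_def
  proof (elim exE conjE)
    fix q assume "0 < real_of_rat q" "real_of_rat q < min x g" "A 0 \<le> real_of_rat q" "\<forall>M. \<exists>m\<ge>M. A m \<le> real_of_rat q"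
    then show ?thesis by (intro exI[of _ "real_of_rat q"]) simp
  qed
qed

lemma ex_split_aux: "(\<exists>t. Pa t \<and> Pb t \<and> Pc t \<and> ((\<exists>n. Q n t) \<or> R t)) \<longleftrightarrow>
   (\<exists>n. \<exists>t. Pa t \<and> Pb t \<and> Pc t \<and> Q n t) \<or> (\<exists>t. Pa t \<and> Pb t \<and> Pc t \<and> R t)"
  by blast

lemma ex_ws_gt_iff:
  fixes T S :: "nat \<Rightarrow> real"
  assumes c: "0 \<le> c"
  shows "(\<exists>t. 0 < t \<and> t < x \<and> c < ws mm mp c c T S t) \<longleftrightarrow>
     (\<exists>n. QA (arr T) (\<lambda>n. arr T n + 2 * (ws_post mm mp c c T S n - c)) n x) \<or>
     QB (arr T) (arr T g0 + 2 * (ws_post mm mp c c T S g0 - c)) x"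
proof -
  let ?b = "\<lambda>n. arr T n + 2 * (ws_post mm mp c c T S n - c)"
  let ?g = "arr T g0 + 2 * (ws_post mm mp c c T S g0 - c)"
  have "(\<exists>t. 0 < t \<and> t < x \<and> c < ws mm mp c c T S t) \<longleftrightarrow>
    (\<exists>t. 0 < t \<and> t < x \<and> arr T 0 \<le> t \<and> ((\<exists>n. arr T n \<le> t \<and> (\<forall>m>n. t < arr T m) \<and> t < ?b n) \<or>
      ((\<forall>N. \<exists>m\<ge>N. arr T m \<le> t) \<and> t < ?g)))"
    apply (intro ex_cong1 conj_cong refl)
    apply (rule ws_gt_iff[OF c])
    by assumption
  also have "\<dots> \<longleftrightarrow> (\<exists>n. \<exists>t. 0 < t \<and> t < x \<and> arr T 0 \<le> t \<and> arr T n \<le> t \<and> (\<forall>m>n. t < arr T m) \<and> t < ?b n) \<or>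
      (\<exists>t. 0 < t \<and> t < x \<and> arr T 0 \<le> t \<and> (\<forall>N. \<exists>m\<ge>N. arr T m \<le> t) \<and> t < ?g)"
    by (rule ex_split_aux[where Pa="\<lambda>t. 0 < t" and Pb="\<lambda>t. t < x" and Pc="\<lambda>t. arr T 0 \<le> t"
         and Q="\<lambda>n t. arr T n \<le> t \<and> (\<forall>m>n. t < arr T m) \<and> t < ?b n"
         and R="\<lambda>t. (\<forall>N. \<exists>m\<ge>N. arr T m \<le> t) \<and> t < ?g"])
  also have "\<dots> \<longleftrightarrow> (\<exists>n. QA (arr T) ?b n x) \<or> QB (arr T) ?g x"
    by (simp add: QA_iff[symmetric] QB_iff[symmetric])
  finally show ?thesis .
qed

lemma below_len_measurable:
  assumes [measurable]: "\<And>i. T' i \<in> borel_measurable N" "\<And>i. S' i \<in> borel_measurable N"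
    and c: "0 \<le> c"
  shows "(\<lambda>\<omega>. below_len mm mp c (\<lambda>i. T' i \<omega>) (\<lambda>i. S' i \<omega>)) \<in> borel_measurable N"
proof -
  define A where "A \<omega> = arr (\<lambda>i. T' i \<omega>)" for \<omega>
  define b where "b \<omega> n = arr (\<lambda>i. T' i \<omega>) n + 2 * (ws_post mm mp c c (\<lambda>i. T' i \<omega>) (\<lambda>i. S' i \<omega>) n - c)" for \<omega> n
  define g where "g \<omega> = arr (\<lambda>i. T' i \<omega>) g0 + 2 * (ws_post mm mp c c (\<lambda>i. T' i \<omega>) (\<lambda>i. S' i \<omega>) g0 - c)" for \<omega>
  define R where "R \<omega> x \<longleftrightarrow> (\<exists>n. QA (A \<omega>) (b \<omega>) n x) \<or> QB (A \<omega>) (g \<omega>) x" for \<omega> x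
  define E where "E \<omega> = {t. 0 < t \<and> c < ws mm mp c c (\<lambda>i. T' i \<omega>) (\<lambda>i. S' i \<omega>) t}" for \<omega>
  have R: "(\<exists>t\<in>E \<omega>. t < x) \<longleftrightarrow> R \<omega> x" for \<omega> x
  proof -
    have "(\<exists>t\<in>E \<omega>. t < x) \<longleftrightarrow> (\<exists>t. 0 < t \<and> t < x \<and> c < ws mm mp c c (\<lambda>i. T' i \<omega>) (\<lambda>i. S' i \<omega>) t)"
      unfolding E_def by auto
    also have "\<dots> \<longleftrightarrow> R \<omega> x" unfolding R_def A_def b_def g_def by (rule ex_ws_gt_iff[OF c, of x mm mp "\<lambda>i. T' i \<omega>" "\<lambda>i. S' i \<omega>"])
    finally show ?thesis .
  qed
  have ne: "E \<omega> \<noteq> {} \<longleftrightarrow> (\<exists>k::nat. R \<omega> (real k))" for \<omega>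
  proof
    assume "E \<omega> \<noteq> {}"
    then obtain t where "t \<in> E \<omega>" by blast
    moreover obtain k :: nat where "t < real k" using reals_Archimedean2 by blast
    ultimately have "\<exists>t\<in>E \<omega>. t < real k" by blast
    then show "\<exists>k::nat. R \<omega> (real k)" unfolding R by blast
  next
    assume "\<exists>k::nat. R \<omega> (real k)"
    then obtain k :: nat where "R \<omega> (real k)" by blast
    then have "\<exists>t\<in>E \<omega>. t < real k" unfolding R[symmetric] .
    then show "E \<omega> \<noteq> {}" by blast
  qed
  have [measurable]: "(\<lambda>\<omega>. A \<omega> n) \<in> borel_measurable N" for n unfolding A_def by measurable
  have [measurable]: "(\<lambda>\<omega>. b \<omega> n) \<in> borel_measurable N" for n unfolding b_def by measurable
  have [measurable]: "g \<in> borel_measurable N" unfolding g_def by measurable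
  have Rm[measurable]: "Measurable.pred N (\<lambda>\<omega>. R \<omega> x)" for x
    unfolding R_def QA_def QB_def by measurable
  show ?thesis
    unfolding borel_measurable_iff_less
  proof
    fix x
    have "{w \<in> space N. below_len mm mp c (\<lambda>i. T' i w) (\<lambda>i. S' i w) < x} =
          {w \<in> space N. ((\<exists>k::nat. R w (real k)) \<and> R w x) \<or> (\<not> (\<exists>k::nat. R w (real k)) \<and> Inf ({}::real set) < x)}"
    proof (intro Collect_cong conj_cong refl)
      fix w
      show "(below_len mm mp c (\<lambda>i. T' i w) (\<lambda>i. S' i w) < x) =
         ((\<exists>k::nat. R w (real k)) \<and> R w x \<or> \<not> (\<exists>k::nat. R w (real k)) \<and> Inf ({}::real set) < x)"
      proof (cases "E w = {}")
        case True
        then show ?thesis using ne[of w] unfolding below_len_def E_def[symmetric] by simp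
      next
        case False
        have bdd: "bdd_below (E w)" unfolding E_def by (rule bdd_belowI[of _ 0]) auto
        have "(Inf (E w) < x) = (\<exists>t\<in>E w. t < x)" by (rule cInf_less_iff[OF False bdd])
        then show ?thesis using ne[of w] False R[of w x] unfolding below_len_def E_def[symmetric] by simp
      qed
    qed
    also have "\<dots> \<in> sets N" by measurable
    finally show "{w \<in> space N. below_len mm mp c (\<lambda>i. T' i w) (\<lambda>i. S' i w) < x} \<in> sets N" .
  qed
qed

lemma tail_measurable:
  assumes "prob_space \<mu>" and sets: "sets \<mu> = sets (borel :: real measure)"
  shows "(\<lambda>s. measure \<mu> {s<..}) \<in> borel_measurable borel"
proof -
  interpret prob_space \<mu> by fact
  have "mono (\<lambda>s. - measure \<mu> {s<..})"
  proof (rule monoI)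
    fix s s' :: real assume "s \<le> s'"
    then have "measure \<mu> {s'<..} \<le> measure \<mu> {s<..}"
      using sets by (intro finite_measure_mono) auto
    then show "- measure \<mu> {s<..} \<le> - measure \<mu> {s'<..}" by simp
  qed
  then have "(\<lambda>s. - measure \<mu> {s<..}) \<in> borel_measurable borel" by (rule borel_measurable_mono)
  then have "(\<lambda>s. - (- measure \<mu> {s<..})) \<in> borel_measurable borel" by measurable
  then show ?thesis by simp
qed

lemma tail_integral:
  assumes P: "prob_space \<mu>" and sets: "sets \<mu> = sets (borel :: real measure)"
  shows "(\<integral>\<^sup>+s. indicator {r<..} s * ennreal (measure \<mu> {s<..}) \<partial>lborel) = (\<integral>\<^sup>+x. ennreal (x - r) \<partial>\<mu>)"
proof -
  interpret prob_space \<mu> by fact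
  interpret pair_sigma_finite lborel \<mu> ..
  have meas[measurable]: "Measurable.pred (lborel \<Otimes>\<^sub>M \<mu>) (\<lambda>(s, x). r < s \<and> s < x)"
    by (simp add: measurable_cong_sets[OF sets_pair_measure_cong[OF refl sets] refl])
  have "(\<integral>\<^sup>+s. indicator {r<..} s * ennreal (measure \<mu> {s<..}) \<partial>lborel) =
        (\<integral>\<^sup>+s. (\<integral>\<^sup>+x. indicator {s. r < s \<and> s < x} s \<partial>\<mu>) \<partial>lborel)"
  proof (intro nn_integral_cong)
    fix s :: real
    have "ennreal (measure \<mu> {s<..}) = emeasure \<mu> {s<..}"
      using sets by (simp add: emeasure_eq_measure)
    also have "\<dots> = (\<integral>\<^sup>+x. indicator {s<..} x \<partial>\<mu>)"
      using sets by (simp add: nn_integral_indicator)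
    finally show "indicator {r<..} s * ennreal (measure \<mu> {s<..}) = (\<integral>\<^sup>+x. indicator {s. r < s \<and> s < x} s \<partial>\<mu>)"
      by (cases "r < s") (auto simp: indicator_def)
  qed
  also have "\<dots> = (\<integral>\<^sup>+x. (\<integral>\<^sup>+s. indicator {s. r < s \<and> s < x} s \<partial>lborel) \<partial>\<mu>)"
    by (rule Fubini'[where f="\<lambda>s x. indicator {s. r < s \<and> s < x} s", symmetric]) (simp add: indicator_def)
  also have "\<dots> = (\<integral>\<^sup>+x. ennreal (x - r) \<partial>\<mu>)"
  proof (intro nn_integral_cong)
    fix x :: real
    have eq: "{s. r < s \<and> s < x} = {r<..<x}" by auto
    show "(\<integral>\<^sup>+s. indicator {s. r < s \<and> s < x} s \<partial>lborel) = ennreal (x - r)"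
      unfolding eq by (cases "r \<le> x") (auto simp: ennreal_neg)
  qed
  finally show ?thesis .
qed

lemma shift_integral:
  assumes [measurable]: "h \<in> borel_measurable borel"
  shows "(\<integral>\<^sup>+s. h s * ennreal (s - t) \<partial>lborel) =
         (\<integral>\<^sup>+r. indicator {t<..} r * (\<integral>\<^sup>+s. indicator {r<..} s * h s \<partial>lborel) \<partial>lborel)"
proof -
  have "(\<integral>\<^sup>+s. h s * ennreal (s - t) \<partial>lborel) = (\<integral>\<^sup>+s. (\<integral>\<^sup>+r. h s * indicator {r. t < r \<and> r < s} r \<partial>lborel) \<partial>lborel)"
  proof (intro nn_integral_cong)
    fix s :: real
    have eq: "{r. t < r \<and> r < s} = {t<..<s}" by auto
    have "(\<integral>\<^sup>+r. h s * indicator {r. t < r \<and> r < s} r \<partial>lborel) = h s * emeasure lborel {t<..<s}"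
      unfolding eq by (simp add: nn_integral_cmult_indicator)
    also have "\<dots> = h s * ennreal (s - t)" by (cases "t \<le> s") (auto simp: ennreal_neg)
    finally show "h s * ennreal (s - t) = (\<integral>\<^sup>+r. h s * indicator {r. t < r \<and> r < s} r \<partial>lborel)" by simp
  qed
  also have "\<dots> = (\<integral>\<^sup>+r. (\<integral>\<^sup>+s. h s * indicator {r. t < r \<and> r < s} r \<partial>lborel) \<partial>lborel)"
    by (rule lborel_pair.Fubini') (simp add: indicator_def)
  also have "\<dots> = (\<integral>\<^sup>+r. indicator {t<..} r * (\<integral>\<^sup>+s. indicator {r<..} s * h s \<partial>lborel) \<partial>lborel)"
  proof (intro nn_integral_cong)
    fix r :: real
    show "(\<integral>\<^sup>+s. h s * indicator {r. t < r \<and> r < s} r \<partial>lborel) = indicator {t<..} r * (\<integral>\<^sup>+s. indicator {r<..} s * h s \<partial>lborel)"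
      by (cases "t < r") (auto simp: indicator_def intro!: nn_integral_cong)
  qed
  finally show ?thesis .
qed

lemma excess_step:
  fixes \<mu> :: "real measure" and K :: real
  assumes P: "prob_space \<mu>" and sets: "sets \<mu> = sets borel"
    and nonneg: "AE x in \<mu>. 0 \<le> x" and int: "integrable \<mu> (\<lambda>x. x)" and pos: "0 < (\<integral>x. x \<partial>\<mu>)"
    and resid: "\<And>t. 0 \<le> t \<Longrightarrow> (\<integral>\<^sup>+x. ennreal (x - t) \<partial>\<mu>) \<le> ennreal K * emeasure \<mu> {t<..}"
  shows "prob_space (excess \<mu>) \<and> sets (excess \<mu>) = sets borel \<and> (AE x in excess \<mu>. 0 \<le> x)
    \<and> integrable (excess \<mu>) (\<lambda>x. x) \<and> (\<integral>x. x \<partial>excess \<mu>) \<le> K \<and> 0 < (\<integral>x. x \<partial>excess \<mu>)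
    \<and> (\<forall>t\<ge>0. (\<integral>\<^sup>+x. ennreal (x - t) \<partial>excess \<mu>) \<le> ennreal K * emeasure (excess \<mu>) {t<..})"
proof -
  interpret prob_space \<mu> by fact
  define E where "E = (\<integral>x. x \<partial>\<mu>)"
  have Epos: "0 < E" using pos by (simp add: E_def)
  define f where "f s = ennreal (indicator {0..} s * measure \<mu> {s<..} / E)" for s :: real
  define c0 where "c0 = ennreal (1 / E)"
  have nu: "excess \<mu> = density lborel f" unfolding excess_def f_def E_def ..
  have tm[measurable]: "(\<lambda>s. measure \<mu> {s<..}) \<in> borel_measurable borel" by (rule tail_measurable[OF P sets])
  have fm[measurable]: "f \<in> borel_measurable borel" unfolding f_def by measurable
  have fml: "f \<in> borel_measurable lborel" using fm by simp
  have fpos: "f s = c0 * ennreal (measure \<mu> {s<..})" if "0 \<le> s" for s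
    using that Epos unfolding f_def c0_def by (simp add: ennreal_mult[symmetric] mult.commute)
  have F5: "(\<integral>\<^sup>+x. ennreal (x - 0) \<partial>\<mu>) = ennreal E"
    unfolding E_def using int nonneg by (simp add: nn_integral_eq_integral)
  have F3: "(\<integral>\<^sup>+s. indicator {r<..} s * f s \<partial>lborel) = c0 * (\<integral>\<^sup>+x. ennreal (x - r) \<partial>\<mu>)" if r: "0 \<le> r" for r
  proof -
    have "(\<integral>\<^sup>+s. indicator {r<..} s * f s \<partial>lborel) = (\<integral>\<^sup>+s. c0 * (indicator {r<..} s * ennreal (measure \<mu> {s<..})) \<partial>lborel)"
      using r by (intro nn_integral_cong) (auto simp: indicator_def fpos)
    also have "\<dots> = c0 * (\<integral>\<^sup>+s. indicator {r<..} s * ennreal (measure \<mu> {s<..}) \<partial>lborel)"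
      by (rule nn_integral_cmult) measurable
    also have "\<dots> = c0 * (\<integral>\<^sup>+x. ennreal (x - r) \<partial>\<mu>)" by (simp add: tail_integral[OF P sets])
    finally show ?thesis .
  qed
  have F4: "(\<integral>\<^sup>+s. indicator {r<..} s * f s \<partial>lborel) \<le> ennreal K * f r" if r: "0 \<le> r" for r
  proof -
    have "(\<integral>\<^sup>+s. indicator {r<..} s * f s \<partial>lborel) \<le> c0 * (ennreal K * emeasure \<mu> {r<..})"
      unfolding F3[OF r] by (intro mult_left_mono resid r) simp
    also have "\<dots> = ennreal K * f r"
      using r sets by (simp add: fpos emeasure_eq_measure ac_simps)
    finally show ?thesis .
  qed
  have F6: "(\<integral>\<^sup>+s. f s \<partial>lborel) = 1"
  proof -
    have "(\<integral>\<^sup>+s. f s \<partial>lborel) = (\<integral>\<^sup>+s. indicator {0<..} s * f s \<partial>lborel)"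
    proof (rule nn_integral_cong_AE)
      show "AE s in lborel. f s = indicator {0<..} s * f s"
        using AE_lborel_singleton[of 0] by eventually_elim (auto simp: f_def indicator_def)
    qed
    also have "\<dots> = c0 * ennreal E" using F3[of 0] F5 by simp
    also have "\<dots> = 1" using Epos by (simp add: c0_def ennreal_mult[symmetric])
    finally show ?thesis .
  qed
  have Pn: "prob_space (excess \<mu>)"
    unfolding nu by (rule prob_spaceI) (simp add: emeasure_density F6)
  interpret N: prob_space "excess \<mu>" by fact
  have sN: "sets (excess \<mu>) = sets borel" unfolding nu by simp
  have aeN: "AE x in excess \<mu>. 0 \<le> x"
    unfolding nu by (rule AE_density[OF fml, THEN iffD2]) (auto simp: f_def indicator_def)
  have F7: "(\<integral>\<^sup>+x. ennreal (x - t) \<partial>excess \<mu>) \<le> ennreal K * emeasure (excess \<mu>) {t<..}" if t: "0 \<le> t" for t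
  proof -
    have "(\<integral>\<^sup>+x. ennreal (x - t) \<partial>excess \<mu>) = (\<integral>\<^sup>+s. f s * ennreal (s - t) \<partial>lborel)"
      unfolding nu by (simp add: nn_integral_density)
    also have "\<dots> = (\<integral>\<^sup>+r. indicator {t<..} r * (\<integral>\<^sup>+s. indicator {r<..} s * f s \<partial>lborel) \<partial>lborel)"
      by (rule shift_integral) measurable
    also have "\<dots> \<le> (\<integral>\<^sup>+r. ennreal K * (f r * indicator {t<..} r) \<partial>lborel)"
    proof (intro nn_integral_mono)
      fix r :: real
      show "indicator {t<..} r * (\<integral>\<^sup>+s. indicator {r<..} s * f s \<partial>lborel) \<le> ennreal K * (f r * indicator {t<..} r)"
        using F4[of r] t by (cases "t < r") (auto simp: indicator_def)
    qed
    also have "\<dots> = ennreal K * emeasure (excess \<mu>) {t<..}"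
      unfolding nu by (simp add: nn_integral_cmult emeasure_density)
    finally show ?thesis .
  qed
  have Kpos: "0 < K"
  proof (rule ccontr)
    assume "\<not> 0 < K"
    then have "ennreal K = 0" by (simp add: ennreal_eq_0_iff)
    then have "ennreal E \<le> 0" using resid[of 0] F5 by simp
    then show False using Epos by simp
  qed
  have F8: "(\<integral>\<^sup>+x. ennreal x \<partial>excess \<mu>) \<le> ennreal K"
  proof -
    have "(\<integral>\<^sup>+x. ennreal x \<partial>excess \<mu>) \<le> ennreal K * emeasure (excess \<mu>) {0<..}" using F7[of 0] by simp
    also have "\<dots> \<le> ennreal K * 1" by (intro mult_left_mono) (auto simp: N.emeasure_le_1)
    finally show ?thesis by simp
  qed
  have idm: "(\<lambda>x. x) \<in> borel_measurable (excess \<mu>)" by (subst measurable_cong_sets[OF sN refl]) simp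
  have intN: "integrable (excess \<mu>) (\<lambda>x. x)"
    by (rule integrableI_nonneg[OF idm aeN]) (use F8 in \<open>auto simp: top.not_eq_extremum intro: le_less_trans\<close>)
  have eqN: "(\<integral>x. x \<partial>excess \<mu>) = enn2real (\<integral>\<^sup>+x. ennreal x \<partial>excess \<mu>)"
    by (rule integral_eq_nn_integral[OF idm aeN])
  have leK: "(\<integral>x. x \<partial>excess \<mu>) \<le> K"
    unfolding eqN using F8 Kpos by (simp add: enn2real_leI)
  have posN: "0 < (\<integral>x. x \<partial>excess \<mu>)"
  proof (rule ccontr)
    assume "\<not> 0 < (\<integral>x. x \<partial>excess \<mu>)"
    moreover have "0 \<le> (\<integral>x. x \<partial>excess \<mu>)" using aeN by (rule integral_nonneg_AE)
    ultimately have "(\<integral>x. x \<partial>excess \<mu>) = 0" by simp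
    then have "AE x in excess \<mu>. x = 0" using integral_nonneg_eq_0_iff_AE[OF intN aeN] by simp
    moreover have "AE x in excess \<mu>. x \<noteq> 0"
      unfolding nu by (rule AE_density[OF fml, THEN iffD2]) (use AE_lborel_singleton[of 0] in \<open>auto elim!: eventually_mono\<close>)
    ultimately have "AE x in excess \<mu>. False" by eventually_elim simp
    then show False by simp
  qed
  show ?thesis using Pn sN aeN intN leK posN F7 by blast
qed

definition stp :: "real \<Rightarrow> real \<Rightarrow> real \<Rightarrow> real \<Rightarrow> real \<times> real \<Rightarrow> real" where
  "stp mm mp c u x = (let w = max 0 (u - fst x / 2) in w + (if to_short mm mp c w (snd x) then snd x else 0))"

primrec Btr :: "real \<Rightarrow> real \<Rightarrow> real \<Rightarrow> (real \<times> real \<Rightarrow> ennreal) \<Rightarrow> nat \<Rightarrow> real \<Rightarrow> (real \<times> real) stream \<Rightarrow> ennreal" where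
  "Btr mm mp c f 0 u xs = 0"
| "Btr mm mp c f (Suc k) u xs = f (shd xs) +
     (if c < stp mm mp c u (shd xs) then 0 else Btr mm mp c f k (stp mm mp c u (shd xs)) (stl xs))"

lemma stp_measurable[measurable]: "(\<lambda>p. stp mm mp c (fst p) (snd p)) \<in> borel_measurable (borel \<Otimes>\<^sub>M (borel \<Otimes>\<^sub>M borel))"
  unfolding stp_def to_short_def Let_def by measurable

lemma Btr_measurable:
  assumes sD: "sets D = sets (borel \<Otimes>\<^sub>M borel)" and f[measurable]: "f \<in> borel_measurable D"
  shows "(\<lambda>p. Btr mm mp c f k (fst p) (snd p)) \<in> borel_measurable (borel \<Otimes>\<^sub>M stream_space D)"
proof (induction k)
  case 0 then show ?case by simp
next
  case (Suc k)
  have sm: "(\<lambda>p. stp mm mp c (fst p) (shd (snd p))) \<in> borel_measurable (borel \<Otimes>\<^sub>M stream_space D)"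
  proof -
    have "(\<lambda>p. (fst p, shd (snd p))) \<in> measurable (borel \<Otimes>\<^sub>M stream_space D) (borel \<Otimes>\<^sub>M (borel \<Otimes>\<^sub>M borel))"
      by (subst measurable_cong_sets[OF refl sets_pair_measure_cong[OF refl sD[symmetric]]]) measurable
    from measurable_compose[OF this stp_measurable] show ?thesis by simp
  qed
  have m2: "(\<lambda>p. (stp mm mp c (fst p) (shd (snd p)), stl (snd p))) \<in> measurable (borel \<Otimes>\<^sub>M stream_space D) (borel \<Otimes>\<^sub>M stream_space D)"
    using sm by measurable
  have IH: "(\<lambda>p. Btr mm mp c f k (stp mm mp c (fst p) (shd (snd p))) (stl (snd p))) \<in> borel_measurable (borel \<Otimes>\<^sub>M stream_space D)"
    using measurable_compose[OF m2 Suc] by simp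
  show ?case using sm IH by simp measurable
qed

locale card_core =
  fixes lam mm mp c \<beta> :: real and ES :: "real measure"
  assumes lam: "0 < lam" and ES: "prob_space ES" and sES: "sets ES = sets borel"
    and params: "0 \<le> mm" "mm \<le> mp" "mp \<le> c"
    and beta: "0 < \<beta>" and Xint: "integrable ES (\<lambda>s. s * indicator {..<mp} s)"
    and Xmean: "lam * (\<integral>s. s * indicator {..<mp} s \<partial>ES) - 1/2 = \<beta>"
begin

declare sES[measurable_cong]

definition ET :: "real measure" where "ET = density lborel (\<lambda>x. ennreal (exponential_density lam x))"
definition D :: "(real \<times> real) measure" where "D = ET \<Otimes>\<^sub>M ES"
definition P :: "(real \<times> real) stream measure" where "P = stream_space D"

lemma ET_prob: "prob_space ET" unfolding ET_def using prob_space_exponential_density[OF lam] .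
lemma sET[measurable_cong]: "sets ET = sets borel" by (simp add: ET_def)

sublocale ET: prob_space ET by (rule ET_prob)
sublocale ES: prob_space ES by (rule ES)
sublocale DD: pair_prob_space ET ES ..

lemma D_prob: "prob_space D" unfolding D_def by (rule DD.prob_space_axioms)
sublocale D: prob_space D by (rule D_prob)

lemma sD[measurable_cong]: "sets D = sets (borel \<Otimes>\<^sub>M borel)"
  unfolding D_def by (rule sets_pair_measure_cong[OF sET sES])

lemma P_prob: "prob_space P" unfolding P_def by (rule D.prob_space_stream_space)
sublocale P: prob_space P by (rule P_prob)

lemma ET_exp: "distributed ET lborel (\<lambda>x. x) (\<lambda>x. ennreal (exponential_density lam x))"
  unfolding distributed_def
  by (auto simp: distr_id2 sET ET_def measurable_cong_sets[OF sET refl])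

lemma ET_int: "integrable ET (\<lambda>x. x)"
  using ET.erlang_ith_moment_integrable[OF lam ET_exp, of 1] by simp

lemma ET_mean: "(\<integral>x. x \<partial>ET) = 1 / lam"
  using ET.exponential_distributed_expectation[OF lam ET_exp] by simp

lemma AE_ET_nonneg: "AE x in ET. 0 \<le> x"
  unfolding ET_def by (rule AE_density[THEN iffD2]) (auto simp: exponential_density_def)

lemma distr_D_fst: "distr D ET fst = ET"
  unfolding D_def by (rule ES.distr_pair_fst)

lemma distr_D_snd: "distr D ES snd = ES"
proof (rule measure_eqI)
  show "sets (distr D ES snd) = sets ES" by simp
  fix A assume A: "A \<in> sets (distr D ES snd)"
  then have A': "A \<in> sets ES" by simp
  have "emeasure (distr D ES snd) A = emeasure D (space ET \<times> A)"
    using A' sets.sets_into_space[OF A'] unfolding D_def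
    by (subst emeasure_distr) (auto simp: space_pair_measure intro!: arg_cong2[where f=emeasure])
  also have "\<dots> = emeasure ES A"
    unfolding D_def using A' by (simp add: ES.emeasure_pair_measure_Times ET.emeasure_space_1)
  finally show "emeasure (distr D ES snd) A = emeasure ES A" .
qed

lemma fst_integrable: "integrable D (\<lambda>x. fst x)"
proof -
  have "integrable (distr D ET fst) (\<lambda>x. x)" using ET_int by (simp add: distr_D_fst)
  then show ?thesis by (subst (asm) integrable_distr_eq) (auto simp: D_def measurable_cong_sets[OF sET refl])
qed

lemma fst_integral: "(\<integral>x. fst x \<partial>D) = 1 / lam"
proof -
  have "(\<integral>x. x \<partial>distr D ET fst) = (\<integral>x. fst x \<partial>D)"
    by (rule integral_distr) (auto simp: D_def measurable_cong_sets[OF sET refl])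
  then show ?thesis using ET_mean by (simp add: distr_D_fst)
qed

definition X :: "real \<Rightarrow> real" where "X s = s * indicator {..<mp} s"

lemma X_integrable: "integrable D (\<lambda>x. X (snd x))"
proof -
  have "integrable (distr D ES snd) X" unfolding distr_D_snd X_def[abs_def] using Xint .
  then show ?thesis by (subst (asm) integrable_distr_eq) (auto simp: D_def X_def[abs_def] measurable_cong_sets[OF sES refl])
qed

lemma X_integral: "(\<integral>x. X (snd x) \<partial>D) = (\<beta> + 1/2) / lam"
proof -
  have "(\<integral>x. X x \<partial>distr D ES snd) = (\<integral>x. X (snd x) \<partial>D)"
    by (rule integral_distr) (auto simp: D_def X_def measurable_cong_sets[OF sES refl])
  then have "(\<integral>x. X (snd x) \<partial>D) = (\<integral>s. s * indicator {..<mp} s \<partial>ES)" by (simp add: distr_D_snd X_def)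
  also have "\<dots> = (\<beta> + 1/2) / lam" using Xmean lam by (simp add: field_simps)
  finally show ?thesis .
qed

lemma AE_D_fst_nonneg: "AE x in D. 0 \<le> fst x"
proof -
  have "AE y in distr D ET fst. 0 \<le> y" unfolding distr_D_fst using AE_ET_nonneg .
  moreover have "fst \<in> measurable D ET" by measurable
  moreover have "{x \<in> space ET. 0 \<le> x} \<in> sets ET" by measurable
  ultimately show ?thesis by (subst (asm) AE_distr_iff) auto
qed

end

context card_core begin

definition phi :: "real \<Rightarrow> real" where "phi u = (c + mp - u) / \<beta>"

lemma c_nonneg: "0 \<le> c" using params by linarith

lemma stp_eq:
  assumes "0 \<le> fst x" "u \<le> c"
  shows "stp mm mp c u x = max 0 (u - fst x / 2) + X (snd x)"
proof -
  have w: "max 0 (u - fst x / 2) \<le> c" using assms c_nonneg by simp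
  have "to_short mm mp c (max 0 (u - fst x / 2)) (snd x) \<longleftrightarrow> snd x < mp"
    using w params unfolding to_short_def by auto
  then show ?thesis unfolding stp_def X_def Let_def by (simp add: indicator_def)
qed

lemma stp_le:
  assumes "0 \<le> fst x" "u \<le> c"
  shows "stp mm mp c u x \<le> c + mp"
proof -
  have w: "max 0 (u - fst x / 2) \<le> c" using assms c_nonneg by simp
  have "X (snd x) \<le> mp" using params by (auto simp: X_def indicator_def)
  then show ?thesis using w stp_eq[OF assms] by linarith
qed

lemma stp_ge:
  assumes "0 \<le> fst x" "u \<le> c"
  shows "u - fst x / 2 + X (snd x) \<le> stp mm mp c u x"
  using stp_eq[OF assms] by simp

lemma stp_shift:
  assumes "0 \<le> t" "t < fst x"
  shows "stp mm mp c u x = stp mm mp c (max 0 (u - t / 2)) (fst x - t, snd x)"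
proof -
  have "max 0 (u - fst x / 2) = max 0 (max 0 (u - t / 2) - (fst x - t) / 2)"
    using assms by (simp add: max_def field_simps)
  then show ?thesis unfolding stp_def Let_def by simp
qed

lemma one_step:
  assumes u: "u \<le> c"
  shows "(\<integral>\<^sup>+x. ennreal (phi (stp mm mp c u x)) \<partial>D) \<le> ennreal (phi u - 1 / lam)"
    and "0 \<le> phi u - 1 / lam"
proof -
  define h where "h x = (c + mp - u + fst x / 2 - X (snd x)) / \<beta>" for x :: "real \<times> real"
  have hint: "integrable D h"
    unfolding h_def using fst_integrable X_integrable by (intro integrable_divide integrable_diff integrable_add) auto
  have hval: "(\<integral>x. h x \<partial>D) = phi u - 1 / lam"
  proof -
    have "(\<integral>x. h x \<partial>D) = (\<integral>x. (c + mp - u) + fst x / 2 - X (snd x) \<partial>D) / \<beta>"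
      unfolding h_def by simp
    also have "(\<integral>x. (c + mp - u) + fst x / 2 - X (snd x) \<partial>D) = (c + mp - u) + (1 / lam) / 2 - (\<beta> + 1/2) / lam"
      using fst_integrable X_integrable by (simp add: fst_integral X_integral D.prob_space)
    also have "(c + mp - u) + (1 / lam) / 2 - (\<beta> + 1/2) / lam = (c + mp - u) - \<beta> / lam"
      using lam by (simp add: field_simps)
    also have "((c + mp - u) - \<beta> / lam) / \<beta> = phi u - 1 / lam"
      using beta by (simp add: phi_def diff_divide_distrib)
    finally show ?thesis .
  qed
  have ae: "AE x in D. phi (stp mm mp c u x) \<le> h x \<and> 0 \<le> phi (stp mm mp c u x)"
    using AE_D_fst_nonneg
  proof eventually_elim
    case (elim x)
    show ?case using stp_ge[OF elim u] stp_le[OF elim u] beta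
      by (auto simp: phi_def h_def divide_right_mono)
  qed
  have hnn: "AE x in D. 0 \<le> h x" using ae by eventually_elim auto
  have "(\<integral>\<^sup>+x. ennreal (phi (stp mm mp c u x)) \<partial>D) \<le> (\<integral>\<^sup>+x. ennreal (h x) \<partial>D)"
    using ae by (intro nn_integral_mono_AE) (auto elim!: eventually_mono intro: ennreal_leI)
  also have "\<dots> = ennreal (\<integral>x. h x \<partial>D)" by (rule nn_integral_eq_integral[OF hint hnn])
  finally show "(\<integral>\<^sup>+x. ennreal (phi (stp mm mp c u x)) \<partial>D) \<le> ennreal (phi u - 1 / lam)" by (simp add: hval)
  have "0 \<le> (\<integral>x. h x \<partial>D)" by (rule integral_nonneg_AE[OF hnn])
  then show "0 \<le> phi u - 1 / lam" by (simp add: hval)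
qed

lemma one_step':
  assumes g[measurable]: "g \<in> borel_measurable D" and gi: "(\<integral>\<^sup>+x. g x \<partial>D) \<le> ennreal (1 / lam)" and u: "u \<le> c"
  shows "(\<integral>\<^sup>+x. g x + ennreal (phi (stp mm mp c u x)) \<partial>D) \<le> ennreal (phi u)"
proof -
  have sm: "(\<lambda>x. stp mm mp c u x) \<in> borel_measurable D"
    unfolding stp_def to_short_def Let_def by measurable
  have "(\<integral>\<^sup>+x. g x + ennreal (phi (stp mm mp c u x)) \<partial>D) = (\<integral>\<^sup>+x. g x \<partial>D) + (\<integral>\<^sup>+x. ennreal (phi (stp mm mp c u x)) \<partial>D)"
    using sm by (intro nn_integral_add) (auto simp: phi_def)
  also have "\<dots> \<le> ennreal (1 / lam) + ennreal (phi u - 1 / lam)"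
    using gi one_step(1)[OF u] by (rule add_mono)
  also have "\<dots> = ennreal (phi u)" using one_step(2)[OF u] lam by (simp add: ennreal_plus[symmetric])
  finally show ?thesis .
qed

lemma ET_memoryless:
  assumes t: "0 \<le> t" and G[measurable]: "G \<in> borel_measurable borel"
  shows "(\<integral>\<^sup>+\<tau>. indicator {t<..} \<tau> * G (\<tau> - t) \<partial>ET) = ennreal (exp (- lam * t)) * (\<integral>\<^sup>+\<tau>. G \<tau> \<partial>ET)"
proof -
  define ed where "ed x = ennreal (exponential_density lam x)" for x
  have edm[measurable]: "ed \<in> borel_measurable borel" unfolding ed_def exponential_density_def by measurable
  have "(\<integral>\<^sup>+\<tau>. indicator {t<..} \<tau> * G (\<tau> - t) \<partial>ET) = (\<integral>\<^sup>+\<tau>. ed \<tau> * (indicator {t<..} \<tau> * G (\<tau> - t)) \<partial>lborel)"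
    unfolding ET_def ed_def by (rule nn_integral_density) measurable
  also have "\<dots> = (\<integral>\<^sup>+y. ed (t + y) * (indicator {t<..} (t + y) * G (t + y - t)) \<partial>lborel)"
  proof -
    have "(\<integral>\<^sup>+\<tau>. ed \<tau> * (indicator {t<..} \<tau> * G (\<tau> - t)) \<partial>lborel) =
          (\<integral>\<^sup>+\<tau>. ed \<tau> * (indicator {t<..} \<tau> * G (\<tau> - t)) \<partial>distr lborel borel ((+) t))"
      by (simp add: lborel_distr_plus)
    also have "\<dots> = (\<integral>\<^sup>+y. ed (t + y) * (indicator {t<..} (t + y) * G (t + y - t)) \<partial>lborel)"
      by (rule nn_integral_distr) auto
    finally show ?thesis .
  qed
  also have "\<dots> = (\<integral>\<^sup>+y. ennreal (exp (- lam * t)) * (ed y * G y) \<partial>lborel)"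
  proof (rule nn_integral_cong_AE)
    show "AE y in lborel. ed (t + y) * (indicator {t<..} (t + y) * G (t + y - t)) = ennreal (exp (- lam * t)) * (ed y * G y)"
      using AE_lborel_singleton[of 0]
    proof eventually_elim
      case (elim y)
      show ?case
      proof (cases "0 < y")
        case True
        have "exponential_density lam (t + y) = exp (- lam * t) * exponential_density lam y"
          using True t by (simp add: exponential_density_def exp_add[symmetric] algebra_simps)
        then show ?thesis using True lam by (simp add: ed_def ennreal_mult exponential_density_nonneg[OF lam] mult.assoc)
      next
        case False
        then have "y < 0" using elim by simp
        then show ?thesis by (simp add: ed_def exponential_density_def)
      qed
    qed
  qed
  also have "\<dots> = ennreal (exp (- lam * t)) * (\<integral>\<^sup>+y. ed y * G y \<partial>lborel)"
    by (rule nn_integral_cmult) measurable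
  also have "(\<integral>\<^sup>+y. ed y * G y \<partial>lborel) = (\<integral>\<^sup>+\<tau>. G \<tau> \<partial>ET)"
    unfolding ET_def ed_def by (rule nn_integral_density[symmetric]) measurable
  finally show ?thesis .
qed

lemma D_memoryless:
  assumes t: "0 \<le> t" and H[measurable]: "H \<in> borel_measurable D"
  shows "(\<integral>\<^sup>+x. indicator {t<..} (fst x) * H (fst x - t, snd x) \<partial>D) = ennreal (exp (- lam * t)) * (\<integral>\<^sup>+x. H x \<partial>D)"
proof -
  have Hb[measurable]: "H \<in> borel_measurable (ET \<Otimes>\<^sub>M ES)" using H unfolding D_def .
  define G where "G y = (\<integral>\<^sup>+s. H (y, s) \<partial>ES)" for y
  have Gm: "G \<in> borel_measurable ET" unfolding G_def by (rule ES.borel_measurable_nn_integral_fst) measurable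
  then have Gb[measurable]: "G \<in> borel_measurable borel" by (simp add: measurable_cong_sets[OF sET refl])
  have "(\<integral>\<^sup>+x. indicator {t<..} (fst x) * H (fst x - t, snd x) \<partial>D) =
        (\<integral>\<^sup>+\<tau>. (\<integral>\<^sup>+s. indicator {t<..} \<tau> * H (\<tau> - t, s) \<partial>ES) \<partial>ET)"
  proof -
    have m: "(\<lambda>x. indicator {t<..} (fst x) * H (fst x - t, snd x)) \<in> borel_measurable (ET \<Otimes>\<^sub>M ES)" by measurable
    show ?thesis unfolding D_def using ES.nn_integral_fst[OF m] by simp
  qed
  also have "\<dots> = (\<integral>\<^sup>+\<tau>. indicator {t<..} \<tau> * G (\<tau> - t) \<partial>ET)"
    unfolding G_def by (intro nn_integral_cong nn_integral_cmult) measurable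
  also have "\<dots> = ennreal (exp (- lam * t)) * (\<integral>\<^sup>+\<tau>. G \<tau> \<partial>ET)" by (rule ET_memoryless[OF t Gb])
  also have "(\<integral>\<^sup>+\<tau>. G \<tau> \<partial>ET) = (\<integral>\<^sup>+x. H x \<partial>D)"
    unfolding G_def D_def by (rule ES.nn_integral_fst[OF Hb])
  finally show ?thesis .
qed

end

lemma ennreal_add_minus1:
  assumes "0 \<le> t" "t \<le> a" shows "ennreal a + R - ennreal t = ennreal (a - t) + R"
proof -
  have "ennreal a = ennreal (a - t) + ennreal t" using assms by (simp add: ennreal_plus[symmetric])
  then have "ennreal a + R - ennreal t = (ennreal (a - t) + R) + ennreal t - ennreal t" by (simp add: ac_simps)
  also have "\<dots> = ennreal (a - t) + R" by (rule ennreal_add_diff_cancel_right) simp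
  finally show ?thesis .
qed

lemma ennreal_add_minus2:
  assumes "0 \<le> a" "a \<le> t" shows "ennreal a + R - ennreal t = R - ennreal (t - a)"
proof (cases R)
  case (real r)
  then show ?thesis using assms by (simp add: ennreal_plus[symmetric] ennreal_minus del: ennreal_plus) (simp add: algebra_simps)
qed simp

lemma ennreal_less_add:
  assumes "0 \<le> a" "a \<le> t" shows "ennreal t < ennreal a + R \<longleftrightarrow> ennreal (t - a) < R"
proof (cases R)
  case (real r)
  then show ?thesis using assms by (simp add: ennreal_plus[symmetric] ennreal_less_iff del: ennreal_plus) linarith
qed simp

context card_core begin

lemma Btr_meas_P[measurable]:
  assumes [measurable]: "f \<in> borel_measurable D"
  shows "(\<lambda>xs. Btr mm mp c f k u xs) \<in> borel_measurable P"
proof -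
  have "(\<lambda>xs. (u, xs)) \<in> measurable P (borel \<Otimes>\<^sub>M stream_space D)" unfolding P_def by measurable
  from measurable_compose[OF this Btr_measurable[OF sD assms]] show ?thesis by simp
qed

lemma Btr_Suc_Stream:
  "Btr mm mp c f (Suc k) u (x ## xs) = f x + (if c < stp mm mp c u x then 0 else Btr mm mp c f k (stp mm mp c u x) xs)"
  by simp

lemma Btr_bound:
  assumes g[measurable]: "g \<in> borel_measurable D" and gi: "(\<integral>\<^sup>+x. g x \<partial>D) \<le> ennreal (1 / lam)"
  shows "u \<le> c \<Longrightarrow> (\<integral>\<^sup>+xs. Btr mm mp c g k u xs \<partial>P) \<le> ennreal (phi u)"
proof (induction k arbitrary: u)
  case 0 then show ?case by simp
next
  case (Suc k)
  have sm: "(\<lambda>x. stp mm mp c u x) \<in> borel_measurable D" unfolding stp_def to_short_def Let_def by measurable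
  have "(\<integral>\<^sup>+xs. Btr mm mp c g (Suc k) u xs \<partial>P) = (\<integral>\<^sup>+x. (\<integral>\<^sup>+xs. Btr mm mp c g (Suc k) u (x ## xs) \<partial>P) \<partial>D)"
    unfolding P_def by (rule D.nn_integral_stream_space) (fold P_def, measurable)
  also have "\<dots> \<le> (\<integral>\<^sup>+x. g x + ennreal (phi (stp mm mp c u x)) \<partial>D)"
  proof (intro nn_integral_mono)
    fix x
    show "(\<integral>\<^sup>+xs. Btr mm mp c g (Suc k) u (x ## xs) \<partial>P) \<le> g x + ennreal (phi (stp mm mp c u x))"
    proof (cases "c < stp mm mp c u x")
      case True
      then have "(\<integral>\<^sup>+xs. Btr mm mp c g (Suc k) u (x ## xs) \<partial>P) = g x"
        by (simp add: P.emeasure_space_1)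
      then show ?thesis by simp
    next
      case False
      have "(\<integral>\<^sup>+xs. Btr mm mp c g (Suc k) u (x ## xs) \<partial>P) = (\<integral>\<^sup>+xs. g x + Btr mm mp c g k (stp mm mp c u x) xs \<partial>P)"
        using False by simp
      also have "\<dots> = g x + (\<integral>\<^sup>+xs. Btr mm mp c g k (stp mm mp c u x) xs \<partial>P)"
        by (subst nn_integral_add) (auto simp: P.emeasure_space_1)
      also have "\<dots> \<le> g x + ennreal (phi (stp mm mp c u x))"
        using Suc.IH[of "stp mm mp c u x"] False by (intro add_left_mono) simp
      finally show ?thesis .
    qed
  qed
  also have "\<dots> \<le> ennreal (phi u)" by (rule one_step'[OF g gi Suc.prems])
  finally show ?case .
qed

end

context card_core begin

definition tp :: "real \<times> real \<Rightarrow> ennreal" where "tp x = ennreal (fst x)"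
definition Kc :: real where "Kc = (c + mp) / \<beta>"

lemma space_D: "space D = UNIV"
  using sets_eq_imp_space_eq[OF sD] by (simp add: space_pair_measure)

lemma cons_meas[measurable]: "(\<lambda>xs. x ## xs) \<in> measurable P P"
  unfolding P_def by (rule measurable_Stream) (auto simp: space_D)

lemma tp_meas[measurable]: "tp \<in> borel_measurable D" unfolding tp_def by measurable

lemma tp_int: "(\<integral>\<^sup>+x. tp x \<partial>D) \<le> ennreal (1 / lam)"
proof -
  have "(\<integral>\<^sup>+x. tp x \<partial>D) = ennreal (\<integral>x. fst x \<partial>D)"
    unfolding tp_def by (rule nn_integral_eq_integral[OF fst_integrable AE_D_fst_nonneg])
  then show ?thesis by (simp add: fst_integral)
qed

lemma phi_le_K: "0 \<le> u \<Longrightarrow> phi u \<le> Kc"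
  using beta by (simp add: phi_def Kc_def divide_right_mono)

lemma Btr_resid:
  "u \<le> c \<Longrightarrow> 0 \<le> t \<Longrightarrow> (\<integral>\<^sup>+xs. Btr mm mp c tp k u xs - ennreal t \<partial>P)
     \<le> ennreal Kc * emeasure P {xs \<in> space P. ennreal t < Btr mm mp c tp k u xs}"
proof (induction k arbitrary: u t)
  case 0 then show ?case by simp
next
  case (Suc k)
  note u = Suc.prems(1) and t = Suc.prems(2)
  define B where "B xs = Btr mm mp c tp (Suc k) u xs" for xs
  define R where "R x xs = (if c < stp mm mp c u x then 0 else Btr mm mp c tp k (stp mm mp c u x) xs)" for x xs
  define a where "a x = max 0 (fst x)" for x :: "real \<times> real"
  define I where "I x = (\<integral>\<^sup>+xs. B (x ## xs) - ennreal t \<partial>P)" for x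
  define Z where "Z x = emeasure P {xs \<in> space P. ennreal t < B (x ## xs)}" for x
  define U where "U x = ennreal (fst x - t) + ennreal (phi (stp mm mp c u x))" for x
  have Bx: "B (x ## xs) = ennreal (a x) + R x xs" for x xs
  proof -
    have "ennreal (fst x) = ennreal (a x)" unfolding a_def by (cases "0 \<le> fst x") (auto simp: max_def ennreal_neg)
    then show ?thesis unfolding B_def R_def tp_def by simp
  qed
  have Bm[measurable]: "B \<in> borel_measurable P" unfolding B_def by measurable
  have consm: "(\<lambda>p. fst p ## snd p) \<in> measurable (D \<Otimes>\<^sub>M P) P" unfolding P_def by measurable
  have joint[measurable]: "(\<lambda>p. B (fst p ## snd p)) \<in> borel_measurable (D \<Otimes>\<^sub>M P)"
    using measurable_compose[OF consm Bm] by simp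
  interpret DP: pair_prob_space D P ..
  have Zm[measurable]: "Z \<in> borel_measurable D"
  proof -
    have eqZ: "Z = (\<lambda>x. \<integral>\<^sup>+xs. indicator {p. ennreal t < B (fst p ## snd p)} (x, xs) \<partial>P)"
    proof (rule ext)
      fix x
      have S: "{xs \<in> space P. ennreal t < B (x ## xs)} \<in> sets P" by measurable
      have "Z x = (\<integral>\<^sup>+xs. indicator {xs \<in> space P. ennreal t < B (x ## xs)} xs \<partial>P)"
        unfolding Z_def by (rule nn_integral_indicator[symmetric, OF S])
      also have "\<dots> = (\<integral>\<^sup>+xs. indicator {p. ennreal t < B (fst p ## snd p)} (x, xs) \<partial>P)"
        by (intro nn_integral_cong) (simp add: indicator_def)
      finally show "Z x = (\<integral>\<^sup>+xs. indicator {p. ennreal t < B (fst p ## snd p)} (x, xs) \<partial>P)" .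
    qed
    show ?thesis unfolding eqZ
      by (rule P.borel_measurable_nn_integral_fst) measurable
  qed
  have sm[measurable]: "(\<lambda>x. stp mm mp c u x) \<in> borel_measurable D" unfolding stp_def to_short_def Let_def by measurable
  have Um[measurable]: "U \<in> borel_measurable D" unfolding U_def phi_def by measurable
  have LHS: "(\<integral>\<^sup>+xs. B xs - ennreal t \<partial>P) = (\<integral>\<^sup>+x. I x \<partial>D)"
    unfolding P_def I_def by (rule D.nn_integral_stream_space) (fold P_def, measurable)
  have RHS: "emeasure P {xs \<in> space P. ennreal t < B xs} = (\<integral>\<^sup>+x. Z x \<partial>D)"
    unfolding P_def Z_def
    by (subst D.emeasure_stream_space) (fold P_def, measurable, simp add: P_def space_stream_space space_D)
  have case1: "I x \<le> U x \<and> Z x = 1" if tx: "t < fst x" for x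
  proof -
    have ax: "a x = fst x" "t \<le> a x" using tx t unfolding a_def by auto
    have "I x = (\<integral>\<^sup>+xs. ennreal (a x - t) + R x xs \<partial>P)"
      unfolding I_def Bx using ax t by (simp add: ennreal_add_minus1)
    also have "\<dots> = ennreal (a x - t) + (\<integral>\<^sup>+xs. R x xs \<partial>P)"
      unfolding R_def by (subst nn_integral_add) (auto simp: P.emeasure_space_1)
    also have "\<dots> \<le> U x"
    proof (cases "c < stp mm mp c u x")
      case True then show ?thesis unfolding R_def U_def using ax by simp
    next
      case False
      then have "(\<integral>\<^sup>+xs. R x xs \<partial>P) \<le> ennreal (phi (stp mm mp c u x))"
        unfolding R_def using Btr_bound[OF tp_meas tp_int] by simp
      then show ?thesis unfolding U_def ax(1) by (rule add_left_mono)
    qed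
    finally have "I x \<le> U x" .
    moreover have "Z x = 1"
    proof -
      have "ennreal t < B (x ## xs)" for xs
      proof -
        have "ennreal t < ennreal (a x)" using ax tx by (simp add: ennreal_less_iff t)
        also have "\<dots> \<le> B (x ## xs)" unfolding Bx by simp
        finally show ?thesis .
      qed
      then have "{xs \<in> space P. ennreal t < B (x ## xs)} = space P" by auto
      then show ?thesis unfolding Z_def by (simp add: P.emeasure_space_1)
    qed
    ultimately show ?thesis by simp
  qed
  have case2: "I x \<le> ennreal Kc * Z x" if tx: "\<not> t < fst x" for x
  proof -
    have ax: "0 \<le> a x" "a x \<le> t" using tx t unfolding a_def by auto
    have I2: "I x = (\<integral>\<^sup>+xs. R x xs - ennreal (t - a x) \<partial>P)"
      unfolding I_def Bx using ax by (simp add: ennreal_add_minus2)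
    have Z2: "Z x = emeasure P {xs \<in> space P. ennreal (t - a x) < R x xs}"
      unfolding Z_def Bx using ax by (simp add: ennreal_less_add)
    show ?thesis
    proof (cases "c < stp mm mp c u x")
      case True then show ?thesis unfolding I2 R_def by simp
    next
      case False
      then show ?thesis unfolding I2 Z2 R_def using Suc.IH[of "stp mm mp c u x" "t - a x"] ax by simp
    qed
  qed
  define ind where "ind x = (indicator {t<..} (fst x) :: ennreal)" for x :: "real \<times> real"
  have indm[measurable]: "ind \<in> borel_measurable D" unfolding ind_def by measurable
  have "(\<integral>\<^sup>+x. I x \<partial>D) \<le> (\<integral>\<^sup>+x. ind x * U x + ennreal Kc * ((1 - ind x) * Z x) \<partial>D)"
  proof (intro nn_integral_mono)
    fix x show "I x \<le> ind x * U x + ennreal Kc * ((1 - ind x) * Z x)"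
      using case1[of x] case2[of x] by (cases "t < fst x") (auto simp: ind_def)
  qed
  also have "\<dots> = (\<integral>\<^sup>+x. ind x * U x \<partial>D) + ennreal Kc * (\<integral>\<^sup>+x. (1 - ind x) * Z x \<partial>D)"
    by (subst nn_integral_add) (auto simp: nn_integral_cmult)
  also have "(\<integral>\<^sup>+x. ind x * U x \<partial>D) \<le> ennreal Kc * (\<integral>\<^sup>+x. ind x \<partial>D)"
  proof -
    define ut where "ut = max 0 (u - t / 2)"
    have ut: "0 \<le> ut" "ut \<le> c" using u t c_nonneg unfolding ut_def by auto
    define H where "H y = tp y + ennreal (phi (stp mm mp c ut y))" for y
    have Hm[measurable]: "H \<in> borel_measurable D" unfolding H_def stp_def to_short_def Let_def phi_def by measurable
    have "(\<integral>\<^sup>+x. ind x * U x \<partial>D) = (\<integral>\<^sup>+x. indicator {t<..} (fst x) * H (fst x - t, snd x) \<partial>D)"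
    proof (intro nn_integral_cong)
      fix x :: "real \<times> real"
      show "ind x * U x = indicator {t<..} (fst x) * H (fst x - t, snd x)"
      proof (cases "t < fst x")
        case True
        have "stp mm mp c u x = stp mm mp c ut (fst x - t, snd x)"
          unfolding ut_def by (rule stp_shift[OF t True])
        then show ?thesis using True unfolding ind_def U_def H_def tp_def by simp
      qed (simp add: ind_def)
    qed
    also have "\<dots> = ennreal (exp (- lam * t)) * (\<integral>\<^sup>+x. H x \<partial>D)" by (rule D_memoryless[OF t Hm])
    also have "\<dots> \<le> ennreal (exp (- lam * t)) * ennreal Kc"
    proof (intro mult_left_mono)
      have "(\<integral>\<^sup>+x. H x \<partial>D) \<le> ennreal (phi ut)" unfolding H_def by (rule one_step'[OF tp_meas tp_int ut(2)])
      also have "\<dots> \<le> ennreal Kc" using phi_le_K[OF ut(1)] by (rule ennreal_leI)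
      finally show "(\<integral>\<^sup>+x. H x \<partial>D) \<le> ennreal Kc" .
    qed simp
    also have "ennreal (exp (- lam * t)) = (\<integral>\<^sup>+x. ind x \<partial>D)"
      using D_memoryless[OF t, of "\<lambda>_. 1"] by (simp add: ind_def D.emeasure_space_1)
    finally show ?thesis by (simp add: mult.commute)
  qed
  also have "ennreal Kc * (\<integral>\<^sup>+x. ind x \<partial>D) + ennreal Kc * (\<integral>\<^sup>+x. (1 - ind x) * Z x \<partial>D)
       = ennreal Kc * (\<integral>\<^sup>+x. ind x + (1 - ind x) * Z x \<partial>D)"
    by (subst nn_integral_add) (auto simp: distrib_left)
  also have "(\<integral>\<^sup>+x. ind x + (1 - ind x) * Z x \<partial>D) = (\<integral>\<^sup>+x. Z x \<partial>D)"
  proof (intro nn_integral_cong)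
    fix x show "ind x + (1 - ind x) * Z x = Z x"
      using case1[of x] by (cases "t < fst x") (auto simp: ind_def)
  qed
  finally show ?case unfolding B_def[symmetric] LHS RHS by (simp add: add_right_mono)
qed

end

lemma ws_post_0: "ws_post mm mp c u T S 0 = stp mm mp c u (T 0, S 0)"
  by (simp add: stp_def Let_def)

lemma ws_post_shift:
  "ws_post mm mp c u T S (Suc n) = ws_post mm mp c (stp mm mp c u (T 0, S 0)) (\<lambda>i. T (Suc i)) (\<lambda>i. S (Suc i)) n"
proof (induction n)
  case 0 then show ?case by (simp add: stp_def Let_def)
next
  case (Suc n)
  have "ws_post mm mp c u T S (Suc (Suc n)) = stp mm mp c (ws_post mm mp c u T S (Suc n)) (T (Suc (Suc n)), S (Suc (Suc n)))"
    by (simp only: ws_post.simps stp_def Let_def fst_conv snd_conv)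
  also have "\<dots> = ws_post mm mp c (stp mm mp c u (T 0, S 0)) (\<lambda>i. T (Suc i)) (\<lambda>i. S (Suc i)) (Suc n)"
    unfolding Suc by (simp only: ws_post.simps stp_def Let_def fst_conv snd_conv)
  finally show ?case .
qed

abbreviation wsq :: "real \<Rightarrow> real \<Rightarrow> real \<Rightarrow> real \<Rightarrow> (real \<times> real) stream \<Rightarrow> nat \<Rightarrow> real" where
  "wsq mm mp c u xs \<equiv> ws_post mm mp c u (\<lambda>i. fst (xs !! i)) (\<lambda>i. snd (xs !! i))"

lemma wsq_0: "wsq mm mp c u xs 0 = stp mm mp c u (shd xs)"
  by (simp only: ws_post_0 snth.simps prod.collapse)

lemma wsq_Suc: "wsq mm mp c u xs (Suc n) = wsq mm mp c (stp mm mp c u (shd xs)) (stl xs) n"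
  by (simp only: ws_post_shift snth.simps prod.collapse)

lemma Btr_noexit:
  "(\<forall>j<k. wsq mm mp c u xs j \<le> c) \<Longrightarrow> Btr mm mp c f k u xs = (\<Sum>i<k. f (xs !! i))"
proof (induction k arbitrary: u xs)
  case 0 then show ?case by simp
next
  case (Suc k)
  have h0': "wsq mm mp c u xs 0 \<le> c" using Suc.prems zero_less_Suc by blast
  have h0: "\<not> c < stp mm mp c u (shd xs)" using h0' unfolding wsq_0 by simp
  have "\<forall>j<k. wsq mm mp c (stp mm mp c u (shd xs)) (stl xs) j \<le> c"
    using Suc.prems by (auto simp: wsq_Suc[symmetric])
  from Suc.IH[OF this] h0 show ?case
    by (simp add: sum.lessThan_Suc_shift del: sum.lessThan_Suc)
qed

lemma Btr_exit:
  "N < k \<Longrightarrow> c < wsq mm mp c u xs N \<Longrightarrow> (\<forall>j<N. wsq mm mp c u xs j \<le> c) \<Longrightarrow>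
   Btr mm mp c f k u xs = (\<Sum>i<Suc N. f (xs !! i))"
proof (induction k arbitrary: u xs N)
  case 0 then show ?case by simp
next
  case (Suc k)
  show ?case
  proof (cases N)
    case 0
    have "c < wsq mm mp c u xs 0" using Suc.prems(2) 0 by (simp only:)
    then have "c < stp mm mp c u (shd xs)" unfolding wsq_0 .
    then show ?thesis using 0 by simp
  next
    case (Suc N')
    have h0': "wsq mm mp c u xs 0 \<le> c" using Suc.prems(3) Suc zero_less_Suc by blast
    have h0: "\<not> c < stp mm mp c u (shd xs)" using h0' unfolding wsq_0 by simp
    have "Btr mm mp c f k (stp mm mp c u (shd xs)) (stl xs) = (\<Sum>i<Suc N'. f (stl xs !! i))"
      using Suc.prems Suc by (intro Suc.IH) (auto simp: wsq_Suc[symmetric])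
    then show ?thesis using h0 Suc by (simp add: sum.lessThan_Suc_shift[of _ "Suc N'"] del: sum.lessThan_Suc)
  qed
qed

lemma Btr_mono_Suc: "Btr mm mp c f k u xs \<le> Btr mm mp c f (Suc k) u xs"
proof (induction k arbitrary: u xs)
  case 0 then show ?case by simp
next
  case (Suc k)
  show ?case
    using Suc.IH[of "stp mm mp c u (shd xs)" "stl xs"] by (auto intro: add_left_mono)
qed

lemma Btr_incseq: "incseq (\<lambda>k. Btr mm mp c f k u xs)"
  by (rule incseq_SucI) (rule Btr_mono_Suc)

lemma SUP_eventually_const:
  fixes g :: "nat \<Rightarrow> 'a::complete_lattice"
  assumes "incseq g" "\<And>k. k \<ge> m \<Longrightarrow> g k = L"
  shows "(SUP k. g k) = L"
proof (rule antisym)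
  show "(SUP k. g k) \<le> L"
  proof (rule SUP_least)
    fix k
    have "g k \<le> g (max k m)" using assms(1) by (simp add: incseq_def)
    also have "\<dots> = L" using assms(2) by simp
    finally show "g k \<le> L" .
  qed
  have "L = g m" using assms(2) by simp
  also have "\<dots> \<le> (SUP k. g k)" by (rule SUP_upper) simp
  finally show "L \<le> (SUP k. g k)" .
qed

context card_core begin

definition Fb :: "(real \<times> real) stream \<Rightarrow> real" where
  "Fb xs = below_len mm mp c (\<lambda>i. fst (xs !! i)) (\<lambda>i. snd (xs !! i))"

definition good :: "(real \<times> real) stream \<Rightarrow> bool" where
  "good xs \<longleftrightarrow> (\<forall>i. 0 < fst (xs !! i)) \<and> (\<exists>N. c < wsq mm mp c c xs N)"

lemma fst_snth_meas[measurable]: "(\<lambda>xs. fst (xs !! i)) \<in> borel_measurable P"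
  unfolding P_def by measurable

lemma snd_snth_meas[measurable]: "(\<lambda>xs. snd (xs !! i)) \<in> borel_measurable P"
  unfolding P_def by measurable

lemma Fb_meas[measurable]: "Fb \<in> borel_measurable P"
  unfolding Fb_def by (rule below_len_measurable[OF fst_snth_meas snd_snth_meas c_nonneg])

lemma good_meas[measurable]: "Measurable.pred P good"
  unfolding good_def by measurable

lemma good_props:
  assumes g: "good xs"
  shows "0 < Fb xs" "\<exists>t>0. c < ws mm mp c c (\<lambda>i. fst (xs !! i)) (\<lambda>i. snd (xs !! i)) t"
    "\<exists>k0. \<forall>k\<ge>k0. Btr mm mp c tp k c xs = ennreal (Fb xs)"
proof -
  define T where "T = (\<lambda>i. fst (xs !! i))"
  define S where "S = (\<lambda>i. snd (xs !! i))"
  have Tpos: "\<And>i. 0 < T i" using g unfolding good_def T_def by auto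
  have ex: "\<exists>N. c < ws_post mm mp c c T S N" using g unfolding good_def T_def S_def by simp
  define N where "N = (LEAST N. c < ws_post mm mp c c T S N)"
  have pN: "c < ws_post mm mp c c T S N" unfolding N_def using ex by (rule LeastI_ex)
  have pj: "ws_post mm mp c c T S j \<le> c" if "j < N" for j
  proof -
    have "\<not> c < ws_post mm mp c c T S j" using not_less_Least[OF that[unfolded N_def]] .
    then show ?thesis by simp
  qed
  note bl = below_len_good[OF c_nonneg Tpos pN pj]
  have F: "Fb xs = arr T N" using bl(1) unfolding Fb_def T_def S_def .
  have W: "c < ws mm mp c c T S (arr T N)" using bl(2) .
  have apos: "0 < arr T N" by (rule arr_pos[OF Tpos])
  show "0 < Fb xs" unfolding F by (rule apos)
  show "\<exists>t>0. c < ws mm mp c c (\<lambda>i. fst (xs !! i)) (\<lambda>i. snd (xs !! i)) t"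
  proof (intro exI[of _ "arr T N"] conjI)
    show "0 < arr T N" by (rule apos)
    show "c < ws mm mp c c (\<lambda>i. fst (xs !! i)) (\<lambda>i. snd (xs !! i)) (arr T N)" using W unfolding T_def S_def .
  qed
  show "\<exists>k0. \<forall>k\<ge>k0. Btr mm mp c tp k c xs = ennreal (Fb xs)"
  proof (intro exI allI impI)
    fix k assume k: "Suc N \<le> k"
    have pN': "c < wsq mm mp c c xs N" using pN unfolding T_def S_def .
    have pj': "\<forall>j<N. wsq mm mp c c xs j \<le> c" using pj unfolding T_def S_def by blast
    have "Btr mm mp c tp k c xs = (\<Sum>i<Suc N. tp (xs !! i))"
      using k by (intro Btr_exit[OF _ pN' pj']) simp
    also have "\<dots> = (\<Sum>i<Suc N. ennreal (T i))" unfolding tp_def T_def ..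
    also have "\<dots> = ennreal (\<Sum>i<Suc N. T i)" by (rule sum_ennreal) (simp add: Tpos less_imp_le)
    also have "\<dots> = ennreal (Fb xs)" unfolding F arr_def ..
    finally show "Btr mm mp c tp k c xs = ennreal (Fb xs)" .
  qed
qed

lemma good_SUP:
  assumes "good xs" shows "(SUP k. Btr mm mp c tp k c xs) = ennreal (Fb xs)" "Btr mm mp c tp k c xs \<le> ennreal (Fb xs)"
proof -
  obtain k0 where k0: "\<And>k. k \<ge> k0 \<Longrightarrow> Btr mm mp c tp k c xs = ennreal (Fb xs)" using good_props(3)[OF assms] by blast
  show S: "(SUP k. Btr mm mp c tp k c xs) = ennreal (Fb xs)"
    by (rule SUP_eventually_const[OF Btr_incseq k0])
  show "Btr mm mp c tp k c xs \<le> ennreal (Fb xs)" unfolding S[symmetric] by (rule SUP_upper) simp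
qed

lemma AE_good: "AE xs in P. good xs"
proof -
  have AEpos: "AE xs in P. \<forall>i. 0 < fst (xs !! i)"
  proof -
    have "AE x in D. 0 < fst x"
    proof -
      have "AE x in ET. 0 < x"
      proof -
        have "AE x in lborel. 0 < ennreal (exponential_density lam x) \<longrightarrow> 0 < x"
          using AE_lborel_singleton[of 0] by eventually_elim (auto simp: exponential_density_def)
        then show ?thesis unfolding ET_def by (subst AE_density) auto
      qed
      then have "AE y in distr D ET fst. 0 < y" unfolding distr_D_fst .
      moreover have "fst \<in> measurable D ET" by measurable
      moreover have "{x \<in> space ET. 0 < x} \<in> sets ET" by measurable
      ultimately show ?thesis by (subst (asm) AE_distr_iff) auto
    qed
    moreover have "Measurable.pred D (\<lambda>x. 0 < fst x)" by measurable
    ultimately have "AE xs in stream_space D. stream_all (\<lambda>x. 0 < fst x) xs"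
      by (intro D.AE_stream_all)
    then show ?thesis unfolding P_def stream_all_def .
  qed
  define A where "A = {xs \<in> space P. \<forall>N. wsq mm mp c c xs N \<le> c}"
  have Am[measurable]: "A \<in> sets P" unfolding A_def by measurable
  define g where "g = (\<lambda>x::real\<times>real. ennreal (1 / lam))"
  have gm[measurable]: "g \<in> borel_measurable D" unfolding g_def by simp
  have gi: "(\<integral>\<^sup>+x. g x \<partial>D) \<le> ennreal (1 / lam)" unfolding g_def by (simp add: D.emeasure_space_1)
  have bnd: "real k / lam * measure P A \<le> phi c" for k
  proof -
    have "ennreal (real k / lam) * emeasure P A = (\<integral>\<^sup>+xs. ennreal (real k / lam) * indicator A xs \<partial>P)"
      by (simp add: nn_integral_cmult_indicator)
    also have "\<dots> \<le> (\<integral>\<^sup>+xs. Btr mm mp c g k c xs \<partial>P)"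
    proof (intro nn_integral_mono)
      fix xs assume "xs \<in> space P"
      show "ennreal (real k / lam) * indicator A xs \<le> Btr mm mp c g k c xs"
      proof (cases "xs \<in> A")
        case True
        then have "Btr mm mp c g k c xs = (\<Sum>i<k. g (xs !! i))" unfolding A_def by (intro Btr_noexit) auto
        also have "\<dots> = ennreal (real k / lam)" unfolding g_def using lam by (simp add: ennreal_of_nat_eq_real_of_nat ennreal_mult[symmetric])
        finally show ?thesis using True by simp
      qed simp
    qed
    also have "\<dots> \<le> ennreal (phi c)" by (rule Btr_bound[OF gm gi]) simp
    finally have "ennreal (real k / lam) * ennreal (measure P A) \<le> ennreal (phi c)"
      by (simp add: P.emeasure_eq_measure)
    moreover have "ennreal (real k / lam) * ennreal (measure P A) = ennreal (real k / lam * measure P A)"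
      by (rule ennreal_mult[symmetric]) (use lam in auto)
    ultimately have "ennreal (real k / lam * measure P A) \<le> ennreal (phi c)" by simp
    moreover have "0 \<le> phi c" using beta params by (simp add: phi_def)
    ultimately show ?thesis by (simp add: ennreal_le_iff)
  qed
  have "measure P A \<le> 0"
  proof (rule field_le_epsilon)
    fix e :: real assume e: "0 < e"
    obtain k :: nat where k: "lam * phi c / e < real k" using reals_Archimedean2 by blast
    have pc: "0 \<le> phi c" using beta params by (simp add: phi_def)
    have "0 \<le> lam * phi c / e" using pc lam e by simp
    then have kpos: "0 < real k" using k by linarith
    have "real k / lam * measure P A \<le> phi c" by (rule bnd)
    then have "measure P A \<le> phi c * lam / real k" using kpos lam by (simp add: field_simps)
    also have "\<dots> < e" using k kpos e lam by (simp add: field_simps)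
    finally show "measure P A \<le> 0 + e" by simp
  qed
  then have "measure P A = 0" by (simp add: antisym)
  then have "A \<in> null_sets P" using Am by (simp add: P.emeasure_eq_measure null_sets_def)
  then have "AE xs in P. xs \<notin> A" by (rule AE_not_in)
  then have AEex: "AE xs in P. \<exists>N. c < wsq mm mp c c xs N"
    by eventually_elim (auto simp: A_def not_le P_def space_stream_space space_D)
  show ?thesis using AEpos AEex unfolding good_def by eventually_elim auto
qed

end

context card_core begin

lemma Btr_fun_incseq: "incseq (\<lambda>k xs. Btr mm mp c f k u xs)"
  using Btr_incseq by (auto simp: incseq_def le_fun_def)

lemma Fb_nn_int: "(\<integral>\<^sup>+xs. ennreal (Fb xs) \<partial>P) \<le> ennreal (phi c)"
proof -
  have "(\<integral>\<^sup>+xs. ennreal (Fb xs) \<partial>P) = (\<integral>\<^sup>+xs. (SUP k. Btr mm mp c tp k c xs) \<partial>P)"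
    by (rule nn_integral_cong_AE) (use AE_good in \<open>eventually_elim, simp add: good_SUP\<close>)
  also have "\<dots> = (SUP k. \<integral>\<^sup>+xs. Btr mm mp c tp k c xs \<partial>P)"
    by (rule nn_integral_monotone_convergence_SUP[OF Btr_fun_incseq]) measurable
  also have "\<dots> \<le> ennreal (phi c)"
    by (rule SUP_least) (rule Btr_bound[OF tp_meas tp_int], simp)
  finally show ?thesis .
qed

lemma Fb_resid:
  assumes t: "0 \<le> t"
  shows "(\<integral>\<^sup>+xs. ennreal (Fb xs - t) \<partial>P) \<le> ennreal Kc * emeasure P {xs \<in> space P. t < Fb xs}"
proof -
  have inc: "incseq (\<lambda>k xs. Btr mm mp c tp k c xs - ennreal t)"
    using Btr_incseq by (auto simp: incseq_def le_fun_def intro: ennreal_minus_mono)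
  have "(\<integral>\<^sup>+xs. ennreal (Fb xs - t) \<partial>P) = (\<integral>\<^sup>+xs. (SUP k. Btr mm mp c tp k c xs - ennreal t) \<partial>P)"
  proof (rule nn_integral_cong_AE)
    show "AE xs in P. ennreal (Fb xs - t) = (SUP k. Btr mm mp c tp k c xs - ennreal t)"
      using AE_good
    proof eventually_elim
      case (elim xs)
      obtain k0 where k0: "\<And>k. k \<ge> k0 \<Longrightarrow> Btr mm mp c tp k c xs = ennreal (Fb xs)"
        using good_props(3)[OF elim] by blast
      have "(SUP k. Btr mm mp c tp k c xs - ennreal t) = ennreal (Fb xs) - ennreal t"
        by (rule SUP_eventually_const[where m=k0]) (use Btr_incseq k0 in \<open>auto simp: incseq_def intro: ennreal_minus_mono\<close>)
      then show ?case using t by (simp add: ennreal_minus)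
    qed
  qed
  also have "\<dots> = (SUP k. \<integral>\<^sup>+xs. Btr mm mp c tp k c xs - ennreal t \<partial>P)"
    by (rule nn_integral_monotone_convergence_SUP[OF inc]) measurable
  also have "\<dots> \<le> ennreal Kc * emeasure P {xs \<in> space P. t < Fb xs}"
  proof (rule SUP_least)
    fix k
    have "(\<integral>\<^sup>+xs. Btr mm mp c tp k c xs - ennreal t \<partial>P) \<le> ennreal Kc * emeasure P {xs \<in> space P. ennreal t < Btr mm mp c tp k c xs}"
      by (rule Btr_resid) (auto simp: t)
    also have "\<dots> \<le> ennreal Kc * emeasure P {xs \<in> space P. t < Fb xs}"
    proof (intro mult_left_mono emeasure_mono_AE)
      show "AE xs in P. xs \<in> {xs \<in> space P. ennreal t < Btr mm mp c tp k c xs} \<longrightarrow> xs \<in> {xs \<in> space P. t < Fb xs}"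
        using AE_good
      proof eventually_elim
        case (elim xs)
        have "Btr mm mp c tp k c xs \<le> ennreal (Fb xs)" by (rule good_SUP(2)[OF elim])
        then show ?case using t by (auto simp: ennreal_less_iff dest: less_le_trans)
      qed
    qed auto
    finally show "(\<integral>\<^sup>+xs. Btr mm mp c tp k c xs - ennreal t \<partial>P) \<le> ennreal Kc * emeasure P {xs \<in> space P. t < Fb xs}" .
  qed
  finally show ?thesis .
qed

lemma stream_main:
  shows "integrable P Fb \<and> (\<integral>xs. Fb xs \<partial>P) \<le> mp / \<beta> \<and> (AE xs in P. good xs)
    \<and> integrable (excess (distr P borel Fb)) (\<lambda>t. t) \<and> (\<integral>t. t \<partial>excess (distr P borel Fb)) \<le> Kc
    \<and> integrable (excess (excess (distr P borel Fb))) (\<lambda>t. t) \<and> (\<integral>t. t \<partial>excess (excess (distr P borel Fb))) \<le> Kc"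
proof -
  have aepos: "AE xs in P. 0 < Fb xs" using AE_good by eventually_elim (rule good_props(1))
  have aenn: "AE xs in P. 0 \<le> Fb xs" using aepos by eventually_elim simp
  have fin: "(\<integral>\<^sup>+xs. ennreal (Fb xs) \<partial>P) < \<infinity>" using Fb_nn_int by (simp add: top.not_eq_extremum le_less_trans)
  have intF: "integrable P Fb" by (rule integrableI_nonneg[OF Fb_meas aenn fin])
  have eqF: "(\<integral>xs. Fb xs \<partial>P) = enn2real (\<integral>\<^sup>+xs. ennreal (Fb xs) \<partial>P)"
    by (rule integral_eq_nn_integral[OF Fb_meas aenn])
  have pc: "phi c = mp / \<beta>" by (simp add: phi_def)
  have leF: "(\<integral>xs. Fb xs \<partial>P) \<le> mp / \<beta>"
    unfolding eqF pc[symmetric] using Fb_nn_int params beta by (intro enn2real_leI) (auto simp: phi_def)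
  have posF: "0 < (\<integral>xs. Fb xs \<partial>P)"
  proof (rule ccontr)
    assume "\<not> 0 < (\<integral>xs. Fb xs \<partial>P)"
    moreover have "0 \<le> (\<integral>xs. Fb xs \<partial>P)" by (rule integral_nonneg_AE[OF aenn])
    ultimately have "(\<integral>xs. Fb xs \<partial>P) = 0" by simp
    then have "AE xs in P. Fb xs = 0" using integral_nonneg_eq_0_iff_AE[OF intF aenn] by simp
    with aepos have "AE xs in P. False" by eventually_elim simp
    then show False by simp
  qed
  define \<mu> where "\<mu> = distr P borel Fb"
  have Pmu: "prob_space \<mu>" unfolding \<mu>_def by (rule P.prob_space_distr[OF Fb_meas])
  have smu: "sets \<mu> = sets borel" unfolding \<mu>_def by simp
  have aemu: "AE x in \<mu>. 0 \<le> x" unfolding \<mu>_def by (subst AE_distr_iff) (auto intro: aenn)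
  have intmu: "integrable \<mu> (\<lambda>x. x)" unfolding \<mu>_def by (subst integrable_distr_eq) (auto intro: intF)
  have intmu_eq: "(\<integral>x. x \<partial>\<mu>) = (\<integral>xs. Fb xs \<partial>P)" unfolding \<mu>_def by (rule integral_distr) auto
  have resmu: "(\<integral>\<^sup>+x. ennreal (x - t) \<partial>\<mu>) \<le> ennreal Kc * emeasure \<mu> {t<..}" if t: "0 \<le> t" for t
  proof -
    have "(\<integral>\<^sup>+x. ennreal (x - t) \<partial>\<mu>) = (\<integral>\<^sup>+xs. ennreal (Fb xs - t) \<partial>P)"
      unfolding \<mu>_def by (rule nn_integral_distr) auto
    moreover have "emeasure \<mu> {t<..} = emeasure P {xs \<in> space P. t < Fb xs}"
      unfolding \<mu>_def by (subst emeasure_distr) (auto intro!: arg_cong2[where f=emeasure])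
    ultimately show ?thesis using Fb_resid[OF t] by simp
  qed
  have pos1: "0 < (\<integral>x. x \<partial>\<mu>)" using posF intmu_eq by simp
  have E1: "prob_space (excess \<mu>) \<and> sets (excess \<mu>) = sets borel \<and> (AE x in excess \<mu>. 0 \<le> x)
    \<and> integrable (excess \<mu>) (\<lambda>x. x) \<and> (\<integral>x. x \<partial>excess \<mu>) \<le> Kc \<and> 0 < (\<integral>x. x \<partial>excess \<mu>)
    \<and> (\<forall>t\<ge>0. (\<integral>\<^sup>+x. ennreal (x - t) \<partial>excess \<mu>) \<le> ennreal Kc * emeasure (excess \<mu>) {t<..})"
    by (rule excess_step[OF Pmu smu aemu intmu pos1 resmu])
  have E2: "prob_space (excess (excess \<mu>)) \<and> sets (excess (excess \<mu>)) = sets borel \<and> (AE x in excess (excess \<mu>). 0 \<le> x)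
    \<and> integrable (excess (excess \<mu>)) (\<lambda>x. x) \<and> (\<integral>x. x \<partial>excess (excess \<mu>)) \<le> Kc \<and> 0 < (\<integral>x. x \<partial>excess (excess \<mu>))
    \<and> (\<forall>t\<ge>0. (\<integral>\<^sup>+x. ennreal (x - t) \<partial>excess (excess \<mu>)) \<le> ennreal Kc * emeasure (excess (excess \<mu>)) {t<..})"
    using E1 by (intro excess_step) auto
  show ?thesis using intF leF AE_good E1 E2 unfolding \<mu>_def by blast
qed

end

lemma snth_to_stream[simp]: "to_stream X !! n = X n"
  by (simp add: to_stream_def)

lemma scylinder_UNIV: "x \<in> scylinder UNIV xs \<longleftrightarrow> (\<forall>i<length xs. x !! i \<in> xs ! i)"
proof (induction xs arbitrary: x)
  case Nil then show ?case by simp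
next
  case (Cons A As)
  show ?case
    by (auto simp: Cons.IH less_Suc_eq_0_disj)
qed

lemma emeasure_scylinder:
  assumes D: "prob_space D" and sp: "space D = UNIV" and xs: "\<forall>A\<in>set xs. A \<in> sets D"
  shows "emeasure (stream_space D) (scylinder UNIV xs) = prod_list (map (emeasure D) xs)"
  using xs
proof (induction xs)
  interpret D: prob_space D by fact
  interpret P: prob_space "stream_space D" by (rule D.prob_space_stream_space)
  case Nil
  have "scylinder UNIV [] = space (stream_space D)" by (simp add: space_stream_space sp)
  then show ?case using P.emeasure_space_1 by (simp add: space_stream_space sp)
next
  interpret D: prob_space D by fact
  case (Cons A As)
  have As: "\<forall>A\<in>set As. A \<in> sets D" and A: "A \<in> sets D" using Cons.prems by auto
  have cyl: "scylinder (space D) L \<in> sets (stream_space D)" if "\<forall>A\<in>set L. A \<in> sets D" for L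
    using sets_scylinder[of L D] that by simp
  have "emeasure (stream_space D) (scylinder UNIV (A # As)) =
        (\<integral>\<^sup>+t. emeasure (stream_space D) {x \<in> space (stream_space D). t ## x \<in> scylinder UNIV (A # As)} \<partial>D)"
    by (rule D.emeasure_stream_space) (use cyl[OF Cons.prems] sp in simp)
  also have "\<dots> = (\<integral>\<^sup>+t. emeasure (stream_space D) (scylinder UNIV As) * indicator A t \<partial>D)"
  proof (intro nn_integral_cong)
    fix t
    have "{x \<in> space (stream_space D). t ## x \<in> scylinder UNIV (A # As)} = (if t \<in> A then scylinder UNIV As else {})"
      by (auto simp: space_stream_space sp scylinder_streams[of UNIV, THEN subsetD])
    then show "emeasure (stream_space D) {x \<in> space (stream_space D). t ## x \<in> scylinder UNIV (A # As)} =
       emeasure (stream_space D) (scylinder UNIV As) * indicator A t" by simp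
  qed
  also have "\<dots> = emeasure (stream_space D) (scylinder UNIV As) * emeasure D A"
    using A by (subst nn_integral_cmult) auto
  finally show ?case using Cons.IH[OF As] by (simp add: mult.commute)
qed

lemma prod_list_map_nth: "prod_list (map f xs) = (\<Prod>i<length xs. f (xs ! i))"
  by (induction xs) (simp_all add: prod.lessThan_Suc_shift del: prod.lessThan_Suc)

lemma iid_stream:
  fixes M :: "'w measure" and T S :: "nat \<Rightarrow> 'w \<Rightarrow> real" and lam :: real
  assumes PM: "prob_space M" and lam: "0 < lam"
    and T_exp: "\<And>i. distributed M lborel (T i) (exponential_density lam)"
    and S_meas: "\<And>i. S i \<in> borel_measurable M"
    and S_iid: "\<And>i. distr M borel (S i) = distr M borel (S 0)"
    and indep: "prob_space.indep_vars M (\<lambda>_. borel) (\<lambda>k. case k of Inl i \<Rightarrow> T i | Inr i \<Rightarrow> S i) UNIV"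
  defines "D \<equiv> density lborel (\<lambda>x. ennreal (exponential_density lam x)) \<Otimes>\<^sub>M distr M borel (S 0)"
  shows "distr M (stream_space D) (\<lambda>\<omega>. to_stream (\<lambda>i. (T i \<omega>, S i \<omega>))) = stream_space D"
proof -
  interpret prob_space M by (rule PM)
  define ET where "ET = density lborel (\<lambda>x. ennreal (exponential_density lam x))"
  define ES where "ES = distr M borel (S 0)"
  have D_eq: "D = ET \<Otimes>\<^sub>M ES" unfolding D_def ES_def ET_def ..
  interpret ET: prob_space ET unfolding ET_def by (rule prob_space_exponential_density[OF lam])
  interpret ES: prob_space ES unfolding ES_def by (rule prob_space_distr[OF S_meas])
  interpret DD: pair_prob_space ET ES ..
  have sET: "sets ET = sets borel" unfolding ET_def by simp
  have sES: "sets ES = sets borel" unfolding ES_def by simp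
  have sD[measurable_cong]: "sets D = sets (borel \<Otimes>\<^sub>M borel)" unfolding D_eq by (rule sets_pair_measure_cong[OF sET sES])
  have spD: "space D = UNIV" using sets_eq_imp_space_eq[OF sD] by (simp add: space_pair_measure)
  have PD: "prob_space D" unfolding D_eq by (rule DD.prob_space_axioms)
  interpret D: prob_space D by (rule PD)
  interpret Ps: prob_space "stream_space D" by (rule D.prob_space_stream_space)
  have Tm[measurable]: "T i \<in> borel_measurable M" for i
    using T_exp[of i] unfolding distributed_def by simp
  have ETd: "distr M lborel (T i) = ET" for i
    using T_exp[of i] unfolding distributed_def ET_def by simp
  have PT: "emeasure ET A = emeasure M (T i -` A \<inter> space M)" if "A \<in> sets borel" for A i
  proof -
    have "emeasure ET A = emeasure (distr M lborel (T i)) A" by (simp add: ETd)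
    also have "\<dots> = emeasure M (T i -` A \<inter> space M)" using that by (subst emeasure_distr) auto
    finally show ?thesis .
  qed
  have PS: "emeasure ES B = emeasure M (S i -` B \<inter> space M)" if "B \<in> sets borel" for B i
  proof -
    have "emeasure ES B = emeasure (distr M borel (S i)) B" by (simp add: ES_def S_iid[of i])
    also have "\<dots> = emeasure M (S i -` B \<inter> space M)" using that S_meas[of i] by (subst emeasure_distr) auto
    finally show ?thesis .
  qed
  define h where "h \<omega> = to_stream (\<lambda>i. (T i \<omega>, S i \<omega>))" for \<omega>
  have hm: "h \<in> measurable M (stream_space D)"
  proof -
    have "(\<lambda>\<omega> i. (T i \<omega>, S i \<omega>)) \<in> measurable M (\<Pi>\<^sub>M i\<in>UNIV. D)"
    proof (rule measurable_PiM_single')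
      fix i
      have [measurable]: "S i \<in> borel_measurable M" by (rule S_meas)
      show "(\<lambda>\<omega>. (T i \<omega>, S i \<omega>)) \<in> measurable M D" by measurable
    qed (auto simp: spD)
    from measurable_compose[OF this measurable_to_stream] show ?thesis unfolding h_def by simp
  qed
  define G where "G = {(A::real set) \<times> (B::real set) | A B. A \<in> sets borel \<and> B \<in> sets borel}"
  have GD: "G \<subseteq> sets D" unfolding G_def sD by auto
  show ?thesis
    unfolding h_def[symmetric]
  proof (rule stream_space_eq_scylinder[where G=G and C="{UNIV}"])
    show "prob_space (distr M (stream_space D) h)" by (rule prob_space_distr[OF hm])
    show "prob_space (stream_space D)" by (rule Ps.prob_space_axioms)
    show "Int_stable G"
    proof (rule Int_stableI)
      fix X Y assume "X \<in> G" "Y \<in> G"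
      then obtain A B A' B' where "X = A \<times> B" "Y = A' \<times> B'" "A \<in> sets borel" "B \<in> sets borel" "A' \<in> sets borel" "B' \<in> sets borel"
        unfolding G_def by blast
      then show "X \<inter> Y \<in> G" unfolding G_def
        by (intro CollectI exI[of _ "A \<inter> A'"] exI[of _ "B \<inter> B'"]) (auto simp: Times_Int_Times)
    qed
    show "sets D = sets (sigma (space D) G)"
      unfolding sD spD G_def sets_pair_measure by (simp add: space_pair_measure)
    show "countable {UNIV :: (real \<times> real) set}" by simp
    show "{UNIV} \<subseteq> G" unfolding G_def by (auto intro!: exI[of _ UNIV])
    show "\<Union>{UNIV} = space D" by (simp add: spD)
    show "G \<subseteq> Pow (space D)" by (simp add: spD)
    show "sets (distr M (stream_space D) h) = sets (stream_space D)" by simp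
    show "sets (stream_space D) = sets (stream_space D)" ..
    fix xs assume ne: "xs \<noteq> []" and xsG: "xs \<in> lists G"
    define n where "n = length xs"
    have npos: "0 < n" using ne unfolding n_def by simp
    have "\<forall>i. \<exists>AB. i < n \<longrightarrow> xs ! i = fst AB \<times> snd AB \<and> fst AB \<in> sets borel \<and> snd AB \<in> sets borel"
    proof
      fix i
      show "\<exists>AB. i < n \<longrightarrow> xs ! i = fst AB \<times> snd AB \<and> fst AB \<in> sets borel \<and> snd AB \<in> sets borel"
      proof (cases "i < n")
        case True
        then have "xs ! i \<in> G" using xsG unfolding n_def by (auto simp: in_lists_conv_set)
        then obtain A B where "xs ! i = A \<times> B" "A \<in> sets borel" "B \<in> sets borel" unfolding G_def by blast
        then show ?thesis by (intro exI[of _ "(A, B)"]) simp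
      qed simp
    qed
    then obtain AB where AB: "\<And>i. i < n \<Longrightarrow> xs ! i = fst (AB i) \<times> snd (AB i) \<and> fst (AB i) \<in> sets borel \<and> snd (AB i) \<in> sets borel"
      by metis
    define A where "A i = fst (AB i)" for i
    define B where "B i = snd (AB i)" for i
    have xsi: "xs ! i = A i \<times> B i" and Ab: "A i \<in> sets borel" and Bb: "B i \<in> sets borel" if "i < n" for i
      using AB[OF that] unfolding A_def B_def by auto
    have RHS: "emeasure (stream_space D) (scylinder (space D) xs) = (\<Prod>i<n. emeasure ET (A i) * emeasure ES (B i))"
    proof -
      have "\<forall>R\<in>set xs. R \<in> sets D" using xsG GD by (auto simp: in_lists_conv_set)
      then have "emeasure (stream_space D) (scylinder UNIV xs) = prod_list (map (emeasure D) xs)"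
        by (rule emeasure_scylinder[OF PD spD])
      also have "\<dots> = (\<Prod>i<n. emeasure D (xs ! i))" unfolding prod_list_map_nth n_def ..
      also have "\<dots> = (\<Prod>i<n. emeasure ET (A i) * emeasure ES (B i))"
      proof (rule prod.cong)
        fix i assume "i \<in> {..<n}"
        then have i: "i < n" by simp
        show "emeasure D (xs ! i) = emeasure ET (A i) * emeasure ES (B i)"
          unfolding xsi[OF i] D_eq using Ab[OF i] Bb[OF i] sET sES
          by (simp add: ES.emeasure_pair_measure_Times)
      qed simp
      finally show ?thesis by (simp add: spD)
    qed
    define X where "X k = (case k of Inl i \<Rightarrow> T i | Inr i \<Rightarrow> S i)" for k
    define CC where "CC k = (case k of Inl i \<Rightarrow> A i | Inr i \<Rightarrow> B i)" for k
    define J where "J = Inl ` {..<n} \<union> Inr ` {..<n}"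
    have indepX: "indep_vars (\<lambda>_. borel) X UNIV" using indep unfolding X_def .
    have Jne: "J \<noteq> {}" "finite J" "J \<subseteq> UNIV" using npos unfolding J_def by auto
    have CCb: "CC j \<in> sets borel" if "j \<in> J" for j using that Ab Bb unfolding J_def CC_def by auto
    have set_eq: "h -` scylinder (space D) xs \<inter> space M = (\<Inter>j\<in>J. X j -` CC j \<inter> space M)"
    proof -
      have "\<omega> \<in> h -` scylinder (space D) xs \<longleftrightarrow> (\<forall>i<n. T i \<omega> \<in> A i \<and> S i \<omega> \<in> B i)" for \<omega>
      proof -
        have "\<omega> \<in> h -` scylinder (space D) xs \<longleftrightarrow> h \<omega> \<in> scylinder UNIV xs" by (simp add: spD)
        also have "\<dots> \<longleftrightarrow> (\<forall>i<n. h \<omega> !! i \<in> xs ! i)" unfolding n_def by (rule scylinder_UNIV)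
        also have "\<dots> \<longleftrightarrow> (\<forall>i<n. T i \<omega> \<in> A i \<and> S i \<omega> \<in> B i)" using xsi by (auto simp: h_def)
        finally show ?thesis .
      qed
      note eq = this
      show ?thesis
      proof (intro set_eqI iffI)
        fix \<omega> assume "\<omega> \<in> h -` scylinder (space D) xs \<inter> space M"
        then show "\<omega> \<in> (\<Inter>j\<in>J. X j -` CC j \<inter> space M)" using eq unfolding J_def X_def CC_def by auto
      next
        fix \<omega> assume a: "\<omega> \<in> (\<Inter>j\<in>J. X j -` CC j \<inter> space M)"
        have "T i \<omega> \<in> A i \<and> S i \<omega> \<in> B i" if i: "i < n" for i
        proof -
          have "Inl i \<in> J" "Inr i \<in> J" using i unfolding J_def by auto
          then have "\<omega> \<in> X (Inl i) -` CC (Inl i)" "\<omega> \<in> X (Inr i) -` CC (Inr i)" using a by blast+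
          then show ?thesis by (simp add: X_def CC_def)
        qed
        moreover have "\<omega> \<in> space M"
        proof -
          have "Inl 0 \<in> J" using npos unfolding J_def by auto
          then show ?thesis using a by blast
        qed
        ultimately show "\<omega> \<in> h -` scylinder (space D) xs \<inter> space M" using eq by blast
      qed
    qed
    have "prob (\<Inter>j\<in>J. X j -` CC j \<inter> space M) = (\<Prod>j\<in>J. prob (X j -` CC j \<inter> space M))"
      by (rule indep_varsD[OF indepX Jne]) (use CCb in auto)
    also have "\<dots> = (\<Prod>i<n. prob (T i -` A i \<inter> space M)) * (\<Prod>i<n. prob (S i -` B i \<inter> space M))"
      unfolding J_def by (subst prod.union_disjoint) (auto simp: prod.reindex X_def CC_def)
    finally have pr: "prob (h -` scylinder (space D) xs \<inter> space M) =
        (\<Prod>i<n. prob (T i -` A i \<inter> space M)) * (\<Prod>i<n. prob (S i -` B i \<inter> space M))"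
      unfolding set_eq .
    have "emeasure (distr M (stream_space D) h) (scylinder (space D) xs) = emeasure M (h -` scylinder (space D) xs \<inter> space M)"
      by (rule emeasure_distr[OF hm]) (use sets_scylinder[of xs D] xsG GD in \<open>auto simp: in_lists_conv_set\<close>)
    also have "\<dots> = ennreal ((\<Prod>i<n. prob (T i -` A i \<inter> space M)) * (\<Prod>i<n. prob (S i -` B i \<inter> space M)))"
      by (simp add: emeasure_eq_measure pr)
    also have "\<dots> = (\<Prod>i<n. emeasure ET (A i) * emeasure ES (B i))"
    proof -
      have e1: "(\<Prod>i<n. emeasure ET (A i)) = ennreal (\<Prod>i<n. prob (T i -` A i \<inter> space M))"
      proof -
        have "(\<Prod>i<n. emeasure ET (A i)) = (\<Prod>i<n. ennreal (prob (T i -` A i \<inter> space M)))"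
        proof (rule prod.cong)
          fix i assume "i \<in> {..<n}"
          then have "A i \<in> sets borel" using Ab by simp
          then show "emeasure ET (A i) = ennreal (prob (T i -` A i \<inter> space M))" using PT[of "A i" i] by (simp add: emeasure_eq_measure)
        qed simp
        also have "\<dots> = ennreal (\<Prod>i<n. prob (T i -` A i \<inter> space M))" by (rule prod_ennreal) simp
        finally show ?thesis .
      qed
      have e2: "(\<Prod>i<n. emeasure ES (B i)) = ennreal (\<Prod>i<n. prob (S i -` B i \<inter> space M))"
      proof -
        have "(\<Prod>i<n. emeasure ES (B i)) = (\<Prod>i<n. ennreal (prob (S i -` B i \<inter> space M)))"
        proof (rule prod.cong)
          fix i assume "i \<in> {..<n}"
          then have "B i \<in> sets borel" using Bb by simp
          then show "emeasure ES (B i) = ennreal (prob (S i -` B i \<inter> space M))" using PS[of "B i" i] by (simp add: emeasure_eq_measure)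
        qed simp
        also have "\<dots> = ennreal (\<Prod>i<n. prob (S i -` B i \<inter> space M))" by (rule prod_ennreal) simp
        finally show ?thesis .
      qed
      show ?thesis unfolding prod.distrib e1 e2 by (simp add: ennreal_mult prod_nonneg)
    qed
    also have "\<dots> = emeasure (stream_space D) (scylinder (space D) xs)" by (rule RHS[symmetric])
    finally show "emeasure (distr M (stream_space D) h) (scylinder (space D) xs) = emeasure (stream_space D) (scylinder (space D) xs)" .
  qed
qed

theorem mainTheorem6:
  fixes M :: "'w measure"
    and T S :: "nat \<Rightarrow> 'w \<Rightarrow> real"
    and lam m_minus m_plus c :: real
  assumes "prob_space M"
    and lam_pos: "0 < lam"
    and T_exp: "\<And>i. distributed M lborel (T i) (exponential_density lam)"
    and S_meas: "\<And>i. S i \<in> borel_measurable M"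
    and S_iid: "\<And>i. distr M borel (S i) = distr M borel (S 0)"
    and indep: "prob_space.indep_vars M (\<lambda>_. borel)
                  (\<lambda>k. case k of Inl i \<Rightarrow> T i | Inr i \<Rightarrow> S i) UNIV"
    and S_nonneg: "AE \<omega> in M. 0 \<le> S 0 \<omega>"
    and S_cont: "\<And>x. measure M {\<omega> \<in> space M. S 0 \<omega> = x} = 0"
    and S_sq: "integrable M (\<lambda>\<omega>. (S 0 \<omega>)\<^sup>2)"
    and rho_lt: "lam * (\<integral>\<omega>. S 0 \<omega> \<partial>M) < 1"
    and eps_lt: "1 - lam * (\<integral>\<omega>. S 0 \<omega> \<partial>M) < 1/2"
    and params: "0 \<le> m_minus" "m_minus \<le> m_plus" "m_plus \<le> c"
    and alpha_pos: "0 < 1/2 - lam * (\<integral>\<omega>. S 0 \<omega> * indicator {..<m_minus} (S 0 \<omega>) \<partial>M)"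
    and beta_pos: "0 < lam * (\<integral>\<omega>. S 0 \<omega> * indicator {..<m_minus} (S 0 \<omega>) \<partial>M)
                      + lam * (\<integral>\<omega>. S 0 \<omega> * indicator {m_minus..<m_plus} (S 0 \<omega>) \<partial>M) - 1/2"
  defines "beta \<equiv> lam * (\<integral>\<omega>. S 0 \<omega> * indicator {..<m_minus} (S 0 \<omega>) \<partial>M)
                   + lam * (\<integral>\<omega>. S 0 \<omega> * indicator {m_minus..<m_plus} (S 0 \<omega>) \<partial>M) - 1/2"
    and "B \<equiv> (\<lambda>\<omega>. below_len m_minus m_plus c (\<lambda>i. T i \<omega>) (\<lambda>i. S i \<omega>))"
  shows "(AE \<omega> in M. \<exists>t>0. ws m_minus m_plus c c (\<lambda>i. T i \<omega>) (\<lambda>i. S i \<omega>) t > c)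
       \<and> integrable M B
       \<and> (\<integral>\<omega>. B \<omega> \<partial>M) \<le> m_plus / beta
       \<and> integrable (excess (distr M borel B)) (\<lambda>t. t)
       \<and> (\<integral>t. t \<partial>excess (distr M borel B)) \<le> (c + m_plus) / beta
       \<and> (c + m_plus) / beta \<le> 2 * c / beta
       \<and> integrable (excess (excess (distr M borel B))) (\<lambda>t. t)
       \<and> (\<integral>t. t \<partial>excess (excess (distr M borel B))) \<le> (c + m_plus) / beta"
proof -
  interpret prob_space M by fact
  define ES where "ES = distr M borel (S 0)"
  have S0m[measurable]: "S 0 \<in> borel_measurable M" by (rule S_meas)
  have S0int: "integrable M (S 0)" by (rule square_integrable_imp_integrable[OF S0m S_sq])
  have intind: "integrable M (\<lambda>\<omega>. S 0 \<omega> * indicator A (S 0 \<omega>))" if A: "A \<in> sets borel" for A :: "real set"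
  proof (rule Bochner_Integration.integrable_bound[OF S0int])
    show "(\<lambda>\<omega>. S 0 \<omega> * indicator A (S 0 \<omega>)) \<in> borel_measurable M" using A by measurable
    show "AE x in M. norm (S 0 x * indicator A (S 0 x)) \<le> norm (S 0 x)"
      by (auto simp: indicator_def)
  qed
  have Xint: "integrable ES (\<lambda>s. s * indicator {..<m_plus} s)"
    unfolding ES_def by (subst integrable_distr_eq) (auto intro: intind)
  have split: "S 0 \<omega> * indicator {..<m_plus} (S 0 \<omega>) =
      S 0 \<omega> * indicator {..<m_minus} (S 0 \<omega>) + S 0 \<omega> * indicator {m_minus..<m_plus} (S 0 \<omega>)" for \<omega>
    using params by (auto simp: indicator_def)
  have Xmean: "lam * (\<integral>s. s * indicator {..<m_plus} s \<partial>ES) - 1/2 = beta"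
  proof -
    have "(\<integral>s. s * indicator {..<m_plus} s \<partial>ES) = (\<integral>\<omega>. S 0 \<omega> * indicator {..<m_plus} (S 0 \<omega>) \<partial>M)"
      unfolding ES_def by (rule integral_distr) auto
    also have "\<dots> = (\<integral>\<omega>. S 0 \<omega> * indicator {..<m_minus} (S 0 \<omega>) \<partial>M) + (\<integral>\<omega>. S 0 \<omega> * indicator {m_minus..<m_plus} (S 0 \<omega>) \<partial>M)"
      unfolding split by (rule Bochner_Integration.integral_add) (auto intro: intind)
    finally show ?thesis unfolding beta_def by (simp add: algebra_simps)
  qed
  have bpos: "0 < beta" using beta_pos unfolding beta_def .
  have PES: "prob_space ES" unfolding ES_def by (rule prob_space_distr) simp
  have sES: "sets ES = sets borel" unfolding ES_def by simp
  interpret cc: card_core lam m_minus m_plus c beta ES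
    by (rule card_core.intro[OF lam_pos PES sES params(1) params(2) params(3) bpos Xint Xmean])
  define h where "h \<omega> = to_stream (\<lambda>i. (T i \<omega>, S i \<omega>))" for \<omega>
  have Dd: "cc.D = density lborel (\<lambda>x. ennreal (exponential_density lam x)) \<Otimes>\<^sub>M distr M borel (S 0)"
  proof -
    have "cc.D = cc.ET \<Otimes>\<^sub>M ES" by (rule cc.D_def)
    then show ?thesis unfolding cc.ET_def ES_def .
  qed
  have dist: "distr M cc.P h = cc.P"
    unfolding cc.P_def h_def Dd by (rule iid_stream[OF \<open>prob_space M\<close> lam_pos T_exp S_meas S_iid indep])
  have Tm[measurable]: "T i \<in> borel_measurable M" for i using T_exp[of i] unfolding distributed_def by simp
  have Sm[measurable]: "S i \<in> borel_measurable M" for i by (rule S_meas)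
  have hm: "h \<in> measurable M cc.P"
  proof -
    have "(\<lambda>\<omega> i. (T i \<omega>, S i \<omega>)) \<in> measurable M (\<Pi>\<^sub>M i\<in>UNIV. cc.D)"
    proof (rule measurable_PiM_single')
      fix i show "(\<lambda>\<omega>. (T i \<omega>, S i \<omega>)) \<in> measurable M cc.D"
        by (subst measurable_cong_sets[OF refl cc.sD]) measurable
    qed (auto simp: cc.space_D)
    from measurable_compose[OF this measurable_to_stream] show ?thesis unfolding h_def cc.P_def by simp
  qed
  have Bh: "B \<omega> = cc.Fb (h \<omega>)" for \<omega> unfolding B_def cc.Fb_def h_def by simp
  have Beq: "B = (\<lambda>\<omega>. cc.Fb (h \<omega>))" using Bh by (rule ext)
  note main = cc.stream_main
  have AEg: "AE xs in cc.P. cc.good xs" using main by blast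
  have AEM: "AE \<omega> in M. cc.good (h \<omega>)"
  proof -
    have "AE xs in distr M cc.P h. cc.good xs" unfolding dist by (rule AEg)
    then show ?thesis using hm by (subst (asm) AE_distr_iff) auto
  qed
  have c1: "AE \<omega> in M. \<exists>t>0. ws m_minus m_plus c c (\<lambda>i. T i \<omega>) (\<lambda>i. S i \<omega>) t > c"
    using AEM
  proof eventually_elim
    case (elim \<omega>)
    from cc.good_props(2)[OF elim] show ?case by (simp add: h_def)
  qed
  have intF: "integrable cc.P cc.Fb" using main by blast
  have c2: "integrable M B"
  proof -
    have "integrable (distr M cc.P h) cc.Fb" unfolding dist by (rule intF)
    then show ?thesis unfolding Beq by (subst (asm) integrable_distr_eq[OF hm]) auto
  qed
  have intB: "(\<integral>\<omega>. B \<omega> \<partial>M) = (\<integral>xs. cc.Fb xs \<partial>cc.P)"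
  proof -
    have "(\<integral>xs. cc.Fb xs \<partial>distr M cc.P h) = (\<integral>\<omega>. cc.Fb (h \<omega>) \<partial>M)" by (rule integral_distr[OF hm]) simp
    then show ?thesis unfolding dist Beq by simp
  qed
  have c3: "(\<integral>\<omega>. B \<omega> \<partial>M) \<le> m_plus / beta" unfolding intB using main by blast
  have dB: "distr M borel B = distr cc.P borel cc.Fb"
  proof -
    have "distr (distr M cc.P h) borel cc.Fb = distr M borel (cc.Fb \<circ> h)" by (rule distr_distr[OF _ hm]) simp
    then show ?thesis unfolding dist Beq by (simp add: comp_def)
  qed
  have Kc: "cc.Kc = (c + m_plus) / beta" unfolding cc.Kc_def ..
  have c6: "(c + m_plus) / beta \<le> 2 * c / beta" using params bpos by (intro divide_right_mono) auto
  show ?thesis unfolding dB using c1 c2 c3 c6 main unfolding Kc by blast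
qed

end
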